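(* Let $(H,R)$ be a finite-dimensional quasitriangular Hopf algebra and $\pi:H\to K$ a surjective Hopf algebra map. Let $L=\{((f\circ\pi)\otimes\mathrm{id})(R_{21}\cdot R)\mid f\in K^*\}\subseteq H$, let $L^+=L\cap\ker\epsilon$, let $K'=H/HL^+$ with quotient map $\pi':H\to K'$. Regard $\mathrm{Rep}_f(K)$ and $\mathrm{Rep}_f(K')$ as full braided tensor subcategories of $\mathrm{Rep}_f(H)$ via pullback along $\pi$ and $\pi'$. Then $\mathrm{Rep}_f(K')$ is the relative Müger centralizer of $\mathrm{Rep}_f(K)$ in $\mathrm{Rep}_f(H)$, i.e. a finite-dimensional $H$-module $Y$ lies in $\mathrm{Rep}_f(K')$ if and only if $c_{Y,X}c_{X,Y}=\mathrm{id}_{X\otimes Y}$ for all $X\in\mathrm{Rep}_f(K)$.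
   Context: $(H,R)$ quasitriangular: $R=\sum_iR_i\otimes R^i$ invertible with $(\Delta\otimes\mathrm{id})(R)=R_{13}R_{23}$, $(\mathrm{id}\otimes\Delta)(R)=R_{13}R_{12}$, $\tau\Delta(h)=R\Delta(h)R^{-1}$. $R_{21}=\sum_iR^i\otimes R_i$ and $R_{21}\cdot R$ is the product in $H\otimes H$. $L$ is a normal left coideal subalgebra of $H$, so $HL^+$ is a Hopf ideal and $K'$ is a quotient Hopf algebra. $\mathrm{Rep}_f(H)$ is the braided tensor category of finite-dimensional left $H$-modules with braiding $c_{X,Y}(x\otimes y)=\sum_iR^iy\otimes R_ix$; $K$ and $K'$ carry the quasitriangular structures $(\pi\otimes\pi)(R)$ and $(\pi'\otimes\pi')(R)$. *)

theory Defs
  imports Main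
begin

text \<open>Finite-dimensional Hopf algebras over a field 'k, given in coordinates with
respect to a basis indexed by a finite type 'a (so elements of H are 'a => 'k,
elements of H (x) H are 'a * 'a => 'k, etc.), via structure constants:
  e_a e_b = sum_c hm a b c e_c,  1 = sum_a hu a e_a,
  Delta e_a = sum_(b,c) hd a b c e_b (x) e_c,  eps e_a = he a,  S e_a = sum_b hS a b e_b.\<close>

record ('a, 'k) hopf_sc =
  hm :: "'a \<Rightarrow> 'a \<Rightarrow> 'a \<Rightarrow> 'k"
  hu :: "'a \<Rightarrow> 'k"
  hd :: "'a \<Rightarrow> 'a \<Rightarrow> 'a \<Rightarrow> 'k"
  he :: "'a \<Rightarrow> 'k"
  hS :: "'a \<Rightarrow> 'a \<Rightarrow> 'k"

definition kdelta :: "'a \<Rightarrow> 'a \<Rightarrow> 'k::field" where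
  "kdelta a b = (if a = b then 1 else 0)"

definition is_hopf :: "('a::finite, 'k::field) hopf_sc \<Rightarrow> bool" where
  "is_hopf H \<longleftrightarrow>
     (\<forall>a b c z. (\<Sum>w\<in>UNIV. hm H a b w * hm H w c z) = (\<Sum>w\<in>UNIV. hm H b c w * hm H a w z)) \<and>
     (\<forall>a z. (\<Sum>w\<in>UNIV. hu H w * hm H w a z) = kdelta a z \<and> (\<Sum>w\<in>UNIV. hu H w * hm H a w z) = kdelta a z) \<and>
     (\<forall>a x y z. (\<Sum>w\<in>UNIV. hd H a w z * hd H w x y) = (\<Sum>w\<in>UNIV. hd H a x w * hd H w y z)) \<and>
     (\<forall>a x. (\<Sum>w\<in>UNIV. he H w * hd H a w x) = kdelta a x \<and> (\<Sum>w\<in>UNIV. he H w * hd H a x w) = kdelta a x) \<and>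
     (\<forall>a b x y. (\<Sum>w\<in>UNIV. hm H a b w * hd H w x y) =
        (\<Sum>p\<in>UNIV. \<Sum>q\<in>UNIV. \<Sum>r\<in>UNIV. \<Sum>s\<in>UNIV. hd H a p q * hd H b r s * hm H p r x * hm H q s y)) \<and>
     (\<forall>x y. (\<Sum>w\<in>UNIV. hu H w * hd H w x y) = hu H x * hu H y) \<and>
     (\<forall>a b. (\<Sum>w\<in>UNIV. hm H a b w * he H w) = he H a * he H b) \<and>
     (\<Sum>w\<in>UNIV. hu H w * he H w) = 1 \<and>
     (\<forall>a z. (\<Sum>p\<in>UNIV. \<Sum>q\<in>UNIV. \<Sum>r\<in>UNIV. hd H a p q * hS H p r * hm H r q z) = he H a * hu H z) \<and>
     (\<forall>a z. (\<Sum>p\<in>UNIV. \<Sum>q\<in>UNIV. \<Sum>r\<in>UNIV. hd H a p q * hS H q r * hm H p r z) = he H a * hu H z)"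

definition t2mul :: "('a::finite, 'k::field) hopf_sc \<Rightarrow> ('a \<times> 'a \<Rightarrow> 'k) \<Rightarrow> ('a \<times> 'a \<Rightarrow> 'k) \<Rightarrow> ('a \<times> 'a \<Rightarrow> 'k)" where
  "t2mul H t s = (\<lambda>(x, y). \<Sum>a1\<in>UNIV. \<Sum>a2\<in>UNIV. \<Sum>b1\<in>UNIV. \<Sum>b2\<in>UNIV.
      t (a1, a2) * s (b1, b2) * hm H a1 b1 x * hm H a2 b2 y)"

definition t3mul :: "('a::finite, 'k::field) hopf_sc \<Rightarrow> ('a \<times> 'a \<times> 'a \<Rightarrow> 'k) \<Rightarrow> ('a \<times> 'a \<times> 'a \<Rightarrow> 'k) \<Rightarrow> ('a \<times> 'a \<times> 'a \<Rightarrow> 'k)" where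
  "t3mul H t s = (\<lambda>(x, y, z). \<Sum>a1\<in>UNIV. \<Sum>a2\<in>UNIV. \<Sum>a3\<in>UNIV. \<Sum>b1\<in>UNIV. \<Sum>b2\<in>UNIV. \<Sum>b3\<in>UNIV.
      t (a1, a2, a3) * s (b1, b2, b3) * hm H a1 b1 x * hm H a2 b2 y * hm H a3 b3 z)"

definition hcomult :: "('a::finite, 'k::field) hopf_sc \<Rightarrow> ('a \<Rightarrow> 'k) \<Rightarrow> ('a \<times> 'a \<Rightarrow> 'k)" where
  "hcomult H h = (\<lambda>(x, y). \<Sum>a\<in>UNIV. h a * hd H a x y)"

text \<open>Quasitriangular structure R = sum_(a,b) R a b e_a (x) e_b.\<close>

definition is_quasitriangular :: "('a::finite, 'k::field) hopf_sc \<Rightarrow> ('a \<Rightarrow> 'a \<Rightarrow> 'k) \<Rightarrow> bool" where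
  "is_quasitriangular H R \<longleftrightarrow>
     (let R2 = (\<lambda>(x, y). R x y); one2 = (\<lambda>(x, y). hu H x * hu H y) in
      (\<exists>Rinv. t2mul H R2 Rinv = one2 \<and> t2mul H Rinv R2 = one2 \<and>
         (\<forall>h. (\<lambda>(x, y). hcomult H h (y, x)) = t2mul H (t2mul H R2 (hcomult H h)) Rinv)) \<and>
      (\<lambda>(x, y, z). \<Sum>a\<in>UNIV. R a z * hd H a x y) =
         t3mul H (\<lambda>(x, y, z). R x z * hu H y) (\<lambda>(x, y, z). hu H x * R y z) \<and>
      (\<lambda>(x, y, z). \<Sum>b\<in>UNIV. R x b * hd H b y z) =
         t3mul H (\<lambda>(x, y, z). R x z * hu H y) (\<lambda>(x, y, z). R x y * hu H z))"

text \<open>Hopf algebra map pi : H -> K, pi e_a = sum_b pi a b f_b.\<close>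

definition is_hopf_map :: "('a::finite, 'k::field) hopf_sc \<Rightarrow> ('b::finite, 'k) hopf_sc \<Rightarrow> ('a \<Rightarrow> 'b \<Rightarrow> 'k) \<Rightarrow> bool" where
  "is_hopf_map H K p \<longleftrightarrow>
     (\<forall>a a' z. (\<Sum>c\<in>UNIV. hm H a a' c * p c z) = (\<Sum>b\<in>UNIV. \<Sum>b'\<in>UNIV. p a b * p a' b' * hm K b b' z)) \<and>
     (\<forall>z. (\<Sum>a\<in>UNIV. hu H a * p a z) = hu K z) \<and>
     (\<forall>a x y. (\<Sum>c\<in>UNIV. p a c * hd K c x y) = (\<Sum>q\<in>UNIV. \<Sum>r\<in>UNIV. hd H a q r * p q x * p r y)) \<and>
     (\<forall>a. (\<Sum>c\<in>UNIV. p a c * he K c) = he H a) \<and>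
     (\<forall>a z. (\<Sum>c\<in>UNIV. hS H a c * p c z) = (\<Sum>b\<in>UNIV. p a b * hS K b z))"

definition lin_map :: "('a::finite \<Rightarrow> 'b \<Rightarrow> 'k::field) \<Rightarrow> ('a \<Rightarrow> 'k) \<Rightarrow> ('b \<Rightarrow> 'k)" where
  "lin_map p x = (\<lambda>b. \<Sum>a\<in>UNIV. x a * p a b)"

definition hmul :: "('a::finite, 'k::field) hopf_sc \<Rightarrow> ('a \<Rightarrow> 'k) \<Rightarrow> ('a \<Rightarrow> 'k) \<Rightarrow> ('a \<Rightarrow> 'k)" where
  "hmul H x y = (\<lambda>c. \<Sum>a\<in>UNIV. \<Sum>b\<in>UNIV. x a * y b * hm H a b c)"

text \<open>A finite-dimensional left module of dimension n: rho a is the n x n matrix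
(entries rho a p q, p q < n) by which the basis vector e_a acts.\<close>

definition is_rep :: "('a::finite, 'k::field) hopf_sc \<Rightarrow> nat \<Rightarrow> ('a \<Rightarrow> nat \<Rightarrow> nat \<Rightarrow> 'k) \<Rightarrow> bool" where
  "is_rep H n rho \<longleftrightarrow>
     (\<forall>a b p q. p < n \<longrightarrow> q < n \<longrightarrow>
        (\<Sum>c\<in>UNIV. hm H a b c * rho c p q) = (\<Sum>r<n. rho a p r * rho b r q)) \<and>
     (\<forall>p q. p < n \<longrightarrow> q < n \<longrightarrow> (\<Sum>a\<in>UNIV. hu H a * rho a p q) = kdelta p q)"

definition act :: "('a::finite \<Rightarrow> nat \<Rightarrow> nat \<Rightarrow> 'k::field) \<Rightarrow> ('a \<Rightarrow> 'k) \<Rightarrow> nat \<Rightarrow> nat \<Rightarrow> 'k" where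
  "act rho x p q = (\<Sum>a\<in>UNIV. x a * rho a p q)"

definition pullback_rep :: "('b::finite, 'k::field) hopf_sc \<Rightarrow> ('a::finite \<Rightarrow> 'b \<Rightarrow> 'k) \<Rightarrow> nat \<Rightarrow> ('a \<Rightarrow> nat \<Rightarrow> nat \<Rightarrow> 'k) \<Rightarrow> bool" where
  "pullback_rep K p n rho \<longleftrightarrow>
     (\<exists>sigma. is_rep K n sigma \<and>
        (\<forall>a q r. q < n \<longrightarrow> r < n \<longrightarrow> rho a q r = (\<Sum>b\<in>UNIV. p a b * sigma b q r)))"

text \<open>L = { ((f o pi) (x) id)(R_21 R) | f in K^* }, L^+ = L \<inter> ker eps, and H L^+.\<close>

definition Lset :: "('a::finite, 'k::field) hopf_sc \<Rightarrow> ('a \<Rightarrow> 'a \<Rightarrow> 'k) \<Rightarrow> ('a \<Rightarrow> 'b::finite \<Rightarrow> 'k) \<Rightarrow> ('a \<Rightarrow> 'k) set" where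
  "Lset H R p = {x. \<exists>f :: 'b \<Rightarrow> 'k.
      x = (\<lambda>v. \<Sum>u\<in>UNIV. (\<Sum>b\<in>UNIV. p u b * f b) * t2mul H (\<lambda>(x, y). R y x) (\<lambda>(x, y). R x y) (u, v))}"

definition Lplus :: "('a::finite, 'k::field) hopf_sc \<Rightarrow> ('a \<Rightarrow> 'a \<Rightarrow> 'k) \<Rightarrow> ('a \<Rightarrow> 'b::finite \<Rightarrow> 'k) \<Rightarrow> ('a \<Rightarrow> 'k) set" where
  "Lplus H R p = {x \<in> Lset H R p. (\<Sum>a\<in>UNIV. x a * he H a) = 0}"

definition HLplus :: "('a::finite, 'k::field) hopf_sc \<Rightarrow> ('a \<Rightarrow> 'a \<Rightarrow> 'k) \<Rightarrow> ('a \<Rightarrow> 'b::finite \<Rightarrow> 'k) \<Rightarrow> ('a \<Rightarrow> 'k) set" where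
  "HLplus H R p = {z. \<exists>(N::nat) h l. (\<forall>i<N. l i \<in> Lplus H R p) \<and> z = (\<lambda>c. \<Sum>i<N. hmul H (h i) (l i) c)}"

text \<open>An H-module lies in Rep_f(K') (K' = H / H L^+, pulled back along the quotient
map pi') iff its action factors through pi', i.e. H L^+ = ker pi' acts by zero.\<close>

definition in_quotient_rep :: "('a::finite, 'k::field) hopf_sc \<Rightarrow> ('a \<Rightarrow> 'a \<Rightarrow> 'k) \<Rightarrow> ('a \<Rightarrow> 'b::finite \<Rightarrow> 'k) \<Rightarrow> nat \<Rightarrow> ('a \<Rightarrow> nat \<Rightarrow> nat \<Rightarrow> 'k) \<Rightarrow> bool" where
  "in_quotient_rep H R p n rho \<longleftrightarrow>
     (\<forall>z \<in> HLplus H R p. \<forall>q r. q < n \<longrightarrow> r < n \<longrightarrow> act rho z q r = 0)"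

text \<open>Braiding c_{X,Y}(x (x) y) = sum_i R^i y (x) R_i x, X = (n, rhoX), Y = (m, rhoY);
vectors of X (x) Y are functions on index pairs (p, q), p < n, q < m.\<close>

definition braid :: "('a::finite \<Rightarrow> 'a \<Rightarrow> 'k::field) \<Rightarrow> nat \<Rightarrow> ('a \<Rightarrow> nat \<Rightarrow> nat \<Rightarrow> 'k) \<Rightarrow> nat \<Rightarrow> ('a \<Rightarrow> nat \<Rightarrow> nat \<Rightarrow> 'k)
    \<Rightarrow> (nat \<times> nat \<Rightarrow> 'k) \<Rightarrow> (nat \<times> nat \<Rightarrow> 'k)" where
  "braid R n rhoX m rhoY v = (\<lambda>(q, p). if q < m \<and> p < n then
      (\<Sum>a\<in>UNIV. \<Sum>b\<in>UNIV. R a b * (\<Sum>q'<m. \<Sum>p'<n. rhoY b q q' * rhoX a p p' * v (p', q'))) else 0)"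

definition in_tensor :: "nat \<Rightarrow> nat \<Rightarrow> (nat \<times> nat \<Rightarrow> 'k::zero) \<Rightarrow> bool" where
  "in_tensor n m v \<longleftrightarrow> (\<forall>p q. v (p, q) \<noteq> 0 \<longrightarrow> p < n \<and> q < m)"

end

theory Submission
  imports Defs
begin

lemma kd_sum1[simp]: "(\<Sum>x\<in>(UNIV::'a::finite set). f x * kdelta a x) = (f a :: 'k::field)"
  by (simp add: kdelta_def if_distrib cong: if_cong)
lemma kd_sum2[simp]: "(\<Sum>x\<in>(UNIV::'a::finite set). f x * kdelta x a) = (f a :: 'k::field)"
  by (simp add: kdelta_def if_distrib cong: if_cong)
lemma kd_sum3[simp]: "(\<Sum>x\<in>(UNIV::'a::finite set). kdelta a x * f x) = (f a :: 'k::field)"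
  using kd_sum1[of f a] by (simp add: mult.commute)
lemma kd_sum4[simp]: "(\<Sum>x\<in>(UNIV::'a::finite set). kdelta x a * f x) = (f a :: 'k::field)"
  using kd_sum2[of f a] by (simp add: mult.commute)

lemma is_hopfD:
  assumes "is_hopf H"
  shows hm_assoc: "\<And>a b c z. (\<Sum>w\<in>UNIV. hm H a b w * hm H w c z) = (\<Sum>w\<in>UNIV. hm H b c w * hm H a w z)"
  and hm_unitl: "\<And>a z. (\<Sum>w\<in>UNIV. hu H w * hm H w a z) = kdelta a z"
  and hm_unitr: "\<And>a z. (\<Sum>w\<in>UNIV. hu H w * hm H a w z) = kdelta a z"
  and hd_counitl: "\<And>a x. (\<Sum>w\<in>UNIV. he H w * hd H a w x) = kdelta a x"
  and hd_counitr: "\<And>a x. (\<Sum>w\<in>UNIV. he H w * hd H a x w) = kdelta a x"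
  and he_mult: "\<And>a b. (\<Sum>w\<in>UNIV. hm H a b w * he H w) = he H a * he H b"
  and he_unit: "(\<Sum>w\<in>UNIV. hu H w * he H w) = 1"
  using assms unfolding is_hopf_def by auto

lemma pA: "(\<Sum>w\<in>Sw. \<Sum>c\<in>Sc. \<Sum>a\<in>Sa. \<Sum>b\<in>Sb. F w c a b) = (\<Sum>a\<in>Sa. \<Sum>b\<in>Sb. \<Sum>c\<in>Sc. \<Sum>w\<in>Sw. F w c a b)"
  by (simp only: sum.cartesian_product) (rule sum.reindex_bij_witness[where i="\<lambda>(a,b,c,w). (w,c,a,b)" and j="\<lambda>(w,c,a,b). (a,b,c,w)"], auto)

lemma pB: "(\<Sum>a\<in>Sa. \<Sum>b\<in>Sb. \<Sum>c\<in>Sc. \<Sum>w\<in>Sw. F a b c w) = (\<Sum>a\<in>Sa. \<Sum>w\<in>Sw. \<Sum>b\<in>Sb. \<Sum>c\<in>Sc. F a b c w)"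
  by (simp only: sum.cartesian_product) (rule sum.reindex_bij_witness[where i="\<lambda>(a,w,b,c). (a,b,c,w)" and j="\<lambda>(a,b,c,w). (a,w,b,c)"], auto)

lemma pxya: "(\<Sum>x\<in>Sx. \<Sum>y\<in>Sy. \<Sum>a\<in>Sa. F x y a) = (\<Sum>a\<in>Sa. \<Sum>y\<in>Sy. \<Sum>x\<in>Sx. F x y a)"
  by (simp only: sum.cartesian_product) (rule sum.reindex_bij_witness[where i="\<lambda>(a,y,x). (x,y,a)" and j="\<lambda>(x,y,a). (a,y,x)"], auto)

lemma p8a: "(\<Sum>x\<in>Sx. \<Sum>y\<in>Sy. \<Sum>a1\<in>Sa1. \<Sum>a2\<in>Sa2. \<Sum>a3\<in>Sa3. \<Sum>b1\<in>Sb1. \<Sum>b2\<in>Sb2. \<Sum>b3\<in>Sb3. F x y a1 a2 a3 b1 b2 b3) = (\<Sum>a1\<in>Sa1. \<Sum>a2\<in>Sa2. \<Sum>a3\<in>Sa3. \<Sum>b1\<in>Sb1. \<Sum>b2\<in>Sb2. \<Sum>b3\<in>Sb3. \<Sum>x\<in>Sx. \<Sum>y\<in>Sy. F x y a1 a2 a3 b1 b2 b3)"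
  by (simp only: sum.cartesian_product) (rule sum.reindex_bij_witness[where i="\<lambda>(a1,a2,a3,b1,b2,b3,x,y). (x,y,a1,a2,a3,b1,b2,b3)" and j="\<lambda>(x,y,a1,a2,a3,b1,b2,b3). (a1,a2,a3,b1,b2,b3,x,y)"], auto)

lemma p6a: "(\<Sum>a1\<in>Sa1. \<Sum>a2\<in>Sa2. \<Sum>a3\<in>Sa3. \<Sum>b1\<in>Sb1. \<Sum>b2\<in>Sb2. \<Sum>b3\<in>Sb3. F a1 a2 a3 b1 b2 b3) = (\<Sum>a3\<in>Sa3. \<Sum>b3\<in>Sb3. \<Sum>a2\<in>Sa2. \<Sum>b1\<in>Sb1. \<Sum>a1\<in>Sa1. \<Sum>b2\<in>Sb2. F a1 a2 a3 b1 b2 b3)"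
  by (simp only: sum.cartesian_product) (rule sum.reindex_bij_witness[where i="\<lambda>(a3,b3,a2,b1,a1,b2). (a1,a2,a3,b1,b2,b3)" and j="\<lambda>(a1,a2,a3,b1,b2,b3). (a3,b3,a2,b1,a1,b2)"], auto)

lemma p5a: "(\<Sum>x\<in>Sx. \<Sum>a1\<in>Sa1. \<Sum>a2\<in>Sa2. \<Sum>b1\<in>Sb1. \<Sum>b2\<in>Sb2. F x a1 a2 b1 b2) = (\<Sum>a2\<in>Sa2. \<Sum>b2\<in>Sb2. \<Sum>a1\<in>Sa1. \<Sum>b1\<in>Sb1. \<Sum>x\<in>Sx. F x a1 a2 b1 b2)"
  by (simp only: sum.cartesian_product) (rule sum.reindex_bij_witness[where i="\<lambda>(a2,b2,a1,b1,x). (x,a1,a2,b1,b2)" and j="\<lambda>(x,a1,a2,b1,b2). (a2,b2,a1,b1,x)"], auto)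

lemma p6b: "(\<Sum>a1\<in>Sa1. \<Sum>a2\<in>Sa2. \<Sum>a3\<in>Sa3. \<Sum>b1\<in>Sb1. \<Sum>b2\<in>Sb2. \<Sum>b3\<in>Sb3. F a1 a2 a3 b1 b2 b3) = (\<Sum>a1\<in>Sa1. \<Sum>b1\<in>Sb1. \<Sum>a2\<in>Sa2. \<Sum>b3\<in>Sb3. \<Sum>a3\<in>Sa3. \<Sum>b2\<in>Sb2. F a1 a2 a3 b1 b2 b3)"
  by (simp only: sum.cartesian_product) (rule sum.reindex_bij_witness[where i="\<lambda>(a1,b1,a2,b3,a3,b2). (a1,a2,a3,b1,b2,b3)" and j="\<lambda>(a1,a2,a3,b1,b2,b3). (a1,b1,a2,b3,a3,b2)"], auto)

lemma p5b: "(\<Sum>y\<in>Sy. \<Sum>a1\<in>Sa1. \<Sum>a2\<in>Sa2. \<Sum>b1\<in>Sb1. \<Sum>b2\<in>Sb2. F y a1 a2 b1 b2) = (\<Sum>a1\<in>Sa1. \<Sum>b1\<in>Sb1. \<Sum>a2\<in>Sa2. \<Sum>b2\<in>Sb2. \<Sum>y\<in>Sy. F y a1 a2 b1 b2)"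
  by (simp only: sum.cartesian_product) (rule sum.reindex_bij_witness[where i="\<lambda>(a1,b1,a2,b2,y). (y,a1,a2,b1,b2)" and j="\<lambda>(y,a1,a2,b1,b2). (a1,b1,a2,b2,y)"], auto)

lemma p8b: "(\<Sum>a\<in>Sa. \<Sum>b\<in>Sb. \<Sum>q\<in>Sq. \<Sum>p\<in>Sp. \<Sum>a'\<in>Sa'. \<Sum>b'\<in>Sb'. \<Sum>r\<in>Sr. \<Sum>s\<in>Ss. F a b q p a' b' r s) = (\<Sum>a\<in>Sa. \<Sum>b\<in>Sb. \<Sum>a'\<in>Sa'. \<Sum>b'\<in>Sb'. \<Sum>s\<in>Ss. \<Sum>r\<in>Sr. \<Sum>q\<in>Sq. \<Sum>p\<in>Sp. F a b q p a' b' r s)"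
  by (simp only: sum.cartesian_product) (rule sum.reindex_bij_witness[where i="\<lambda>(a,b,a',b',s,r,q,p). (a,b,q,p,a',b',r,s)" and j="\<lambda>(a,b,q,p,a',b',r,s). (a,b,a',b',s,r,q,p)"], auto)

lemma p8c: "(\<Sum>a\<in>Sa. \<Sum>b\<in>Sb. \<Sum>a'\<in>Sa'. \<Sum>b'\<in>Sb'. \<Sum>s\<in>Ss. \<Sum>r\<in>Sr. \<Sum>d\<in>Sd. \<Sum>c\<in>Sc. F a b a' b' s r d c) = (\<Sum>c\<in>Sc. \<Sum>d\<in>Sd. \<Sum>s\<in>Ss. \<Sum>r\<in>Sr. \<Sum>b\<in>Sb. \<Sum>a\<in>Sa. \<Sum>a'\<in>Sa'. \<Sum>b'\<in>Sb'. F a b a' b' s r d c)"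
  by (simp only: sum.cartesian_product) (rule sum.reindex_bij_witness[where i="\<lambda>(c,d,s,r,b,a,a',b'). (a,b,a',b',s,r,d,c)" and j="\<lambda>(a,b,a',b',s,r,d,c). (c,d,s,r,b,a,a',b')"], auto)

lemma p5c: "(\<Sum>c\<in>Sc. \<Sum>d\<in>Sd. \<Sum>i\<in>Si. \<Sum>j\<in>Sj. \<Sum>b\<in>Sb. F c d i j b) = (\<Sum>i\<in>Si. \<Sum>j\<in>Sj. \<Sum>b\<in>Sb. \<Sum>d\<in>Sd. \<Sum>c\<in>Sc. F c d i j b)"
  by (simp only: sum.cartesian_product) (rule sum.reindex_bij_witness[where i="\<lambda>(i,j,b,d,c). (c,d,i,j,b)" and j="\<lambda>(c,d,i,j,b). (i,j,b,d,c)"], auto)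

lemma p3a: "(\<Sum>a\<in>Sa. \<Sum>b\<in>Sb. \<Sum>r\<in>Sr. F a b r) = (\<Sum>r\<in>Sr. \<Sum>a\<in>Sa. \<Sum>b\<in>Sb. F a b r)"
  by (simp only: sum.cartesian_product) (rule sum.reindex_bij_witness[where i="\<lambda>(r,a,b). (a,b,r)" and j="\<lambda>(a,b,r). (r,a,b)"], auto)

lemma p3b: "(\<Sum>c\<in>Sc. \<Sum>a\<in>Sa. \<Sum>b\<in>Sb. F c a b) = (\<Sum>a\<in>Sa. \<Sum>b\<in>Sb. \<Sum>c\<in>Sc. F c a b)"
  by (simp only: sum.cartesian_product) (rule sum.reindex_bij_witness[where i="\<lambda>(a,b,c). (c,a,b)" and j="\<lambda>(c,a,b). (a,b,c)"], auto)

lemma p3c: "(\<Sum>b\<in>Sb. \<Sum>b1\<in>Sb1. \<Sum>b2\<in>Sb2. F b b1 b2) = (\<Sum>b1\<in>Sb1. \<Sum>b2\<in>Sb2. \<Sum>b\<in>Sb. F b b1 b2)"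
  by (simp only: sum.cartesian_product) (rule sum.reindex_bij_witness[where i="\<lambda>(b1,b2,b). (b,b1,b2)" and j="\<lambda>(b,b1,b2). (b1,b2,b)"], auto)


lemma hmul_assoc:
  assumes "is_hopf H"
  shows "hmul H (hmul H x y) z = hmul H x (hmul H y z)"
proof
  fix c
  have "hmul H (hmul H x y) z c = (\<Sum>w\<in>UNIV. \<Sum>c'\<in>UNIV. \<Sum>a\<in>UNIV. \<Sum>b\<in>UNIV. x a * y b * z c' * (hm H a b w * hm H w c' c))"
    by (simp add: hmul_def sum_distrib_right sum_distrib_left ac_simps)
  also have "\<dots> = (\<Sum>a\<in>UNIV. \<Sum>b\<in>UNIV. \<Sum>c'\<in>UNIV. \<Sum>w\<in>UNIV. x a * y b * z c' * (hm H a b w * hm H w c' c))"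
    by (rule pA)
  also have "\<dots> = (\<Sum>a\<in>UNIV. \<Sum>b\<in>UNIV. \<Sum>c'\<in>UNIV. x a * y b * z c' * (\<Sum>w\<in>UNIV. hm H a b w * hm H w c' c))"
    by (simp add: sum_distrib_left)
  also have "\<dots> = (\<Sum>a\<in>UNIV. \<Sum>b\<in>UNIV. \<Sum>c'\<in>UNIV. x a * y b * z c' * (\<Sum>w\<in>UNIV. hm H b c' w * hm H a w c))"
    by (simp add: hm_assoc[OF assms])
  also have "\<dots> = (\<Sum>a\<in>UNIV. \<Sum>b\<in>UNIV. \<Sum>c'\<in>UNIV. \<Sum>w\<in>UNIV. x a * y b * z c' * (hm H b c' w * hm H a w c))"
    by (simp add: sum_distrib_left)
  also have "\<dots> = (\<Sum>a\<in>UNIV. \<Sum>w\<in>UNIV. \<Sum>b\<in>UNIV. \<Sum>c'\<in>UNIV. x a * y b * z c' * (hm H b c' w * hm H a w c))"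
    by (rule pB)
  also have "\<dots> = hmul H x (hmul H y z) c"
    by (simp add: hmul_def sum_distrib_left sum_distrib_right ac_simps)
  finally show "hmul H (hmul H x y) z c = hmul H x (hmul H y z) c" .
qed

lemma hmul_unitr: assumes "is_hopf H" shows "hmul H x (hu H) = x"
proof
  fix c
  have "hmul H x (hu H) c = (\<Sum>a\<in>UNIV. x a * (\<Sum>b\<in>UNIV. hu H b * hm H a b c))"
    by (simp add: hmul_def sum_distrib_left ac_simps)
  also have "\<dots> = x c" by (simp add: hm_unitr[OF assms])
  finally show "hmul H x (hu H) c = x c" .
qed

lemma hmul_unitl: assumes "is_hopf H" shows "hmul H (hu H) x = x"
proof
  fix c
  have "hmul H (hu H) x c = (\<Sum>a\<in>UNIV. \<Sum>b\<in>UNIV. x b * (hu H a * hm H a b c))"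
    by (simp add: hmul_def ac_simps)
  also have "\<dots> = (\<Sum>b\<in>UNIV. \<Sum>a\<in>UNIV. x b * (hu H a * hm H a b c))"
    by (rule sum.swap)
  also have "\<dots> = (\<Sum>b\<in>UNIV. x b * (\<Sum>a\<in>UNIV. hu H a * hm H a b c))"
    by (simp add: sum_distrib_left)
  also have "\<dots> = x c" by (simp add: hm_unitl[OF assms])
  finally show "hmul H (hu H) x c = x c" .
qed

lemma qtD:
  assumes "is_quasitriangular H R"
  shows "\<exists>Rinv. t2mul H (\<lambda>(x, y). R x y) Rinv = (\<lambda>(x, y). hu H x * hu H y) \<and>
                t2mul H Rinv (\<lambda>(x, y). R x y) = (\<lambda>(x, y). hu H x * hu H y)"
  and "\<And>x y z. (\<Sum>a\<in>UNIV. R a z * hd H a x y) =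
         t3mul H (\<lambda>(x, y, z). R x z * hu H y) (\<lambda>(x, y, z). hu H x * R y z) (x, y, z)"
  and "\<And>x y z. (\<Sum>b\<in>UNIV. R x b * hd H b y z) =
         t3mul H (\<lambda>(x, y, z). R x z * hu H y) (\<lambda>(x, y, z). R x y * hu H z) (x, y, z)"
proof -
  show "\<exists>Rinv. t2mul H (\<lambda>(x, y). R x y) Rinv = (\<lambda>(x, y). hu H x * hu H y) \<and>
                t2mul H Rinv (\<lambda>(x, y). R x y) = (\<lambda>(x, y). hu H x * hu H y)"
    using assms unfolding is_quasitriangular_def Let_def by blast
next
  fix x y z
  have "(\<lambda>(x, y, z). \<Sum>a\<in>UNIV. R a z * hd H a x y) =
         t3mul H (\<lambda>(x, y, z). R x z * hu H y) (\<lambda>(x, y, z). hu H x * R y z)"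
    using assms unfolding is_quasitriangular_def Let_def by blast
  from fun_cong[OF this, of "(x,y,z)"]
  show "(\<Sum>a\<in>UNIV. R a z * hd H a x y) =
         t3mul H (\<lambda>(x, y, z). R x z * hu H y) (\<lambda>(x, y, z). hu H x * R y z) (x, y, z)" by simp
next
  fix x y z
  have "(\<lambda>(x, y, z). \<Sum>b\<in>UNIV. R x b * hd H b y z) =
         t3mul H (\<lambda>(x, y, z). R x z * hu H y) (\<lambda>(x, y, z). R x y * hu H z)"
    using assms unfolding is_quasitriangular_def Let_def by blast
  from fun_cong[OF this, of "(x,y,z)"]
  show "(\<Sum>b\<in>UNIV. R x b * hd H b y z) =
         t3mul H (\<lambda>(x, y, z). R x z * hu H y) (\<lambda>(x, y, z). R x y * hu H z) (x, y, z)" by simp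
qed

definition eR1 :: "('a::finite, 'k::field) hopf_sc \<Rightarrow> ('a \<Rightarrow> 'a \<Rightarrow> 'k) \<Rightarrow> 'a \<Rightarrow> 'k" where
  "eR1 H R = (\<lambda>z. \<Sum>a\<in>UNIV. he H a * R a z)"
definition eR2 :: "('a::finite, 'k::field) hopf_sc \<Rightarrow> ('a \<Rightarrow> 'a \<Rightarrow> 'k) \<Rightarrow> 'a \<Rightarrow> 'k" where
  "eR2 H R = (\<lambda>a. \<Sum>b\<in>UNIV. R a b * he H b)"

lemma he_mult': assumes "is_hopf H" shows "(\<Sum>x\<in>UNIV. hm H a b x * he H x * c) = he H a * he H b * c"
  using he_mult[OF assms, of a b] by (simp add: sum_distrib_right[symmetric])

lemma E1_idem:
  assumes H: "is_hopf H" and Q: "is_quasitriangular H R"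
  shows "hmul H (eR1 H R) (eR1 H R) = eR1 H R"
proof
  fix z
  have eq: "(\<Sum>x\<in>UNIV. \<Sum>y\<in>UNIV. he H x * he H y * (\<Sum>a\<in>UNIV. R a z * hd H a x y)) =
      (\<Sum>x\<in>UNIV. \<Sum>y\<in>UNIV. he H x * he H y * t3mul H (\<lambda>(x, y, z). R x z * hu H y) (\<lambda>(x, y, z). hu H x * R y z) (x, y, z))"
    by (simp add: qtD(2)[OF Q])
  have L: "(\<Sum>x\<in>UNIV. \<Sum>y\<in>UNIV. he H x * he H y * (\<Sum>a\<in>UNIV. R a z * hd H a x y)) = eR1 H R z"
  proof -
    have "(\<Sum>x\<in>UNIV. \<Sum>y\<in>UNIV. he H x * he H y * (\<Sum>a\<in>UNIV. R a z * hd H a x y))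
       = (\<Sum>x\<in>UNIV. \<Sum>y\<in>UNIV. \<Sum>a\<in>UNIV. he H x * he H y * (R a z * hd H a x y))"
      by (simp add: sum_distrib_left)
    also have "\<dots> = (\<Sum>a\<in>UNIV. \<Sum>y\<in>UNIV. \<Sum>x\<in>UNIV. he H x * he H y * (R a z * hd H a x y))"
      by (rule pxya)
    also have "\<dots> = (\<Sum>a\<in>UNIV. R a z * (\<Sum>y\<in>UNIV. he H y * (\<Sum>x\<in>UNIV. he H x * hd H a x y)))"
      by (simp add: sum_distrib_left ac_simps)
    also have "\<dots> = eR1 H R z"
      by (simp add: hd_counitl[OF H] mult.commute eR1_def)
    finally show ?thesis .
  qed
  have Rt: "(\<Sum>x\<in>UNIV. \<Sum>y\<in>UNIV. he H x * he H y * t3mul H (\<lambda>(x, y, z). R x z * hu H y) (\<lambda>(x, y, z). hu H x * R y z) (x, y, z))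
     = hmul H (eR1 H R) (eR1 H R) z"
  proof -
    have "(\<Sum>x\<in>UNIV. \<Sum>y\<in>UNIV. he H x * he H y * t3mul H (\<lambda>(x, y, z). R x z * hu H y) (\<lambda>(x, y, z). hu H x * R y z) (x, y, z))
      = (\<Sum>x\<in>UNIV. \<Sum>y\<in>UNIV. \<Sum>a1\<in>UNIV. \<Sum>a2\<in>UNIV. \<Sum>a3\<in>UNIV. \<Sum>b1\<in>UNIV. \<Sum>b2\<in>UNIV. \<Sum>b3\<in>UNIV.
          he H x * he H y * (R a1 a3 * hu H a2 * (hu H b1 * R b2 b3) * hm H a1 b1 x * hm H a2 b2 y * hm H a3 b3 z))"
      by (simp add: t3mul_def sum_distrib_left ac_simps)
    also have "\<dots> = (\<Sum>a1\<in>UNIV. \<Sum>a2\<in>UNIV. \<Sum>a3\<in>UNIV. \<Sum>b1\<in>UNIV. \<Sum>b2\<in>UNIV. \<Sum>b3\<in>UNIV. \<Sum>x\<in>UNIV. \<Sum>y\<in>UNIV.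
          he H x * he H y * (R a1 a3 * hu H a2 * (hu H b1 * R b2 b3) * hm H a1 b1 x * hm H a2 b2 y * hm H a3 b3 z))"
      by (rule p8a)
    also have "\<dots> = (\<Sum>a1\<in>UNIV. \<Sum>a2\<in>UNIV. \<Sum>a3\<in>UNIV. \<Sum>b1\<in>UNIV. \<Sum>b2\<in>UNIV. \<Sum>b3\<in>UNIV.
          R a1 a3 * hu H a2 * (hu H b1 * R b2 b3) * hm H a3 b3 z * (\<Sum>x\<in>UNIV. hm H a1 b1 x * he H x * (\<Sum>y\<in>UNIV. hm H a2 b2 y * he H y)))"
      by (simp add: sum_distrib_left sum_distrib_right ac_simps)
    also have "\<dots> = (\<Sum>a1\<in>UNIV. \<Sum>a2\<in>UNIV. \<Sum>a3\<in>UNIV. \<Sum>b1\<in>UNIV. \<Sum>b2\<in>UNIV. \<Sum>b3\<in>UNIV.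
          R a1 a3 * hu H a2 * (hu H b1 * R b2 b3) * hm H a3 b3 z * (he H a1 * he H b1 * (he H a2 * he H b2)))"
      by (simp only: he_mult[OF H] he_mult'[OF H])
    also have "\<dots> = (\<Sum>a3\<in>UNIV. \<Sum>b3\<in>UNIV. \<Sum>a2\<in>UNIV. \<Sum>b1\<in>UNIV. \<Sum>a1\<in>UNIV. \<Sum>b2\<in>UNIV.
          R a1 a3 * hu H a2 * (hu H b1 * R b2 b3) * hm H a3 b3 z * (he H a1 * he H b1 * (he H a2 * he H b2)))"
      by (rule p6a)
    also have "\<dots> = (\<Sum>a3\<in>UNIV. \<Sum>b3\<in>UNIV. \<Sum>a2\<in>UNIV. \<Sum>b1\<in>UNIV.
          hu H a2 * he H a2 * (hu H b1 * he H b1) * hm H a3 b3 z * (\<Sum>a1\<in>UNIV. he H a1 * R a1 a3 * (\<Sum>b2\<in>UNIV. he H b2 * R b2 b3)))"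
      by (simp add: sum_distrib_left sum_distrib_right ac_simps)
    also have "\<dots> = (\<Sum>a3\<in>UNIV. \<Sum>b3\<in>UNIV. \<Sum>a2\<in>UNIV. \<Sum>b1\<in>UNIV.
          hu H a2 * he H a2 * (hu H b1 * he H b1) * hm H a3 b3 z * (eR1 H R a3 * eR1 H R b3))"
      by (simp only: eR1_def sum_distrib_right[symmetric])
    also have "\<dots> = (\<Sum>a3\<in>UNIV. \<Sum>b3\<in>UNIV.
          hm H a3 b3 z * (eR1 H R a3 * eR1 H R b3) * (\<Sum>a2\<in>UNIV. hu H a2 * he H a2 * (\<Sum>b1\<in>UNIV. hu H b1 * he H b1)))"
      by (simp add: sum_distrib_left sum_distrib_right ac_simps)
    also have "\<dots> = hmul H (eR1 H R) (eR1 H R) z"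
      by (simp only: he_unit[OF H] mult_1_right) (simp add: hmul_def ac_simps)
    finally show ?thesis .
  qed
  show "hmul H (eR1 H R) (eR1 H R) z = eR1 H R z"
    using eq L Rt by simp
qed

lemma E2_idem:
  assumes H: "is_hopf H" and Q: "is_quasitriangular H R"
  shows "hmul H (eR2 H R) (eR2 H R) = eR2 H R"
proof
  fix x
  have eq: "(\<Sum>y\<in>UNIV. \<Sum>z\<in>UNIV. he H y * he H z * (\<Sum>b\<in>UNIV. R x b * hd H b y z)) =
      (\<Sum>y\<in>UNIV. \<Sum>z\<in>UNIV. he H y * he H z * t3mul H (\<lambda>(x, y, z). R x z * hu H y) (\<lambda>(x, y, z). R x y * hu H z) (x, y, z))"
    by (simp add: qtD(3)[OF Q])
  have L: "(\<Sum>y\<in>UNIV. \<Sum>z\<in>UNIV. he H y * he H z * (\<Sum>b\<in>UNIV. R x b * hd H b y z)) = eR2 H R x"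
  proof -
    have "(\<Sum>y\<in>UNIV. \<Sum>z\<in>UNIV. he H y * he H z * (\<Sum>b\<in>UNIV. R x b * hd H b y z))
       = (\<Sum>y\<in>UNIV. \<Sum>z\<in>UNIV. \<Sum>b\<in>UNIV. he H y * he H z * (R x b * hd H b y z))"
      by (simp add: sum_distrib_left)
    also have "\<dots> = (\<Sum>b\<in>UNIV. \<Sum>z\<in>UNIV. \<Sum>y\<in>UNIV. he H y * he H z * (R x b * hd H b y z))"
      by (rule pxya)
    also have "\<dots> = (\<Sum>b\<in>UNIV. \<Sum>y\<in>UNIV. \<Sum>z\<in>UNIV. he H y * he H z * (R x b * hd H b y z))"
      by (rule sum.cong[OF refl], rule sum.swap)
    also have "\<dots> = (\<Sum>b\<in>UNIV. R x b * (\<Sum>y\<in>UNIV. he H y * (\<Sum>z\<in>UNIV. he H z * hd H b y z)))"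
      by (simp add: sum_distrib_left ac_simps)
    also have "\<dots> = eR2 H R x"
      by (simp add: hd_counitr[OF H] eR2_def)
    finally show ?thesis .
  qed
  have Rt: "(\<Sum>y\<in>UNIV. \<Sum>z\<in>UNIV. he H y * he H z * t3mul H (\<lambda>(x, y, z). R x z * hu H y) (\<lambda>(x, y, z). R x y * hu H z) (x, y, z))
     = hmul H (eR2 H R) (eR2 H R) x"
  proof -
    have "(\<Sum>y\<in>UNIV. \<Sum>z\<in>UNIV. he H y * he H z * t3mul H (\<lambda>(x, y, z). R x z * hu H y) (\<lambda>(x, y, z). R x y * hu H z) (x, y, z))
      = (\<Sum>y\<in>UNIV. \<Sum>z\<in>UNIV. \<Sum>a1\<in>UNIV. \<Sum>a2\<in>UNIV. \<Sum>a3\<in>UNIV. \<Sum>b1\<in>UNIV. \<Sum>b2\<in>UNIV. \<Sum>b3\<in>UNIV.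
          he H y * he H z * (R a1 a3 * hu H a2 * (R b1 b2 * hu H b3) * hm H a1 b1 x * hm H a2 b2 y * hm H a3 b3 z))"
      by (simp add: t3mul_def sum_distrib_left ac_simps)
    also have "\<dots> = (\<Sum>a1\<in>UNIV. \<Sum>a2\<in>UNIV. \<Sum>a3\<in>UNIV. \<Sum>b1\<in>UNIV. \<Sum>b2\<in>UNIV. \<Sum>b3\<in>UNIV. \<Sum>y\<in>UNIV. \<Sum>z\<in>UNIV.
          he H y * he H z * (R a1 a3 * hu H a2 * (R b1 b2 * hu H b3) * hm H a1 b1 x * hm H a2 b2 y * hm H a3 b3 z))"
      by (rule p8a)
    also have "\<dots> = (\<Sum>a1\<in>UNIV. \<Sum>a2\<in>UNIV. \<Sum>a3\<in>UNIV. \<Sum>b1\<in>UNIV. \<Sum>b2\<in>UNIV. \<Sum>b3\<in>UNIV.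
          R a1 a3 * hu H a2 * (R b1 b2 * hu H b3) * hm H a1 b1 x * (\<Sum>y\<in>UNIV. hm H a2 b2 y * he H y * (\<Sum>z\<in>UNIV. hm H a3 b3 z * he H z)))"
      by (simp add: sum_distrib_left sum_distrib_right ac_simps)
    also have "\<dots> = (\<Sum>a1\<in>UNIV. \<Sum>a2\<in>UNIV. \<Sum>a3\<in>UNIV. \<Sum>b1\<in>UNIV. \<Sum>b2\<in>UNIV. \<Sum>b3\<in>UNIV.
          R a1 a3 * hu H a2 * (R b1 b2 * hu H b3) * hm H a1 b1 x * (he H a2 * he H b2 * (he H a3 * he H b3)))"
      by (simp only: he_mult[OF H] he_mult'[OF H])
    also have "\<dots> = (\<Sum>a1\<in>UNIV. \<Sum>b1\<in>UNIV. \<Sum>a2\<in>UNIV. \<Sum>b3\<in>UNIV. \<Sum>a3\<in>UNIV. \<Sum>b2\<in>UNIV.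
          R a1 a3 * hu H a2 * (R b1 b2 * hu H b3) * hm H a1 b1 x * (he H a2 * he H b2 * (he H a3 * he H b3)))"
      by (rule p6b)
    also have "\<dots> = (\<Sum>a1\<in>UNIV. \<Sum>b1\<in>UNIV. \<Sum>a2\<in>UNIV. \<Sum>b3\<in>UNIV.
          hu H a2 * he H a2 * (hu H b3 * he H b3) * hm H a1 b1 x * (\<Sum>a3\<in>UNIV. R a1 a3 * he H a3 * (\<Sum>b2\<in>UNIV. R b1 b2 * he H b2)))"
      by (simp add: sum_distrib_left sum_distrib_right ac_simps)
    also have "\<dots> = (\<Sum>a1\<in>UNIV. \<Sum>b1\<in>UNIV. \<Sum>a2\<in>UNIV. \<Sum>b3\<in>UNIV.
          hu H a2 * he H a2 * (hu H b3 * he H b3) * hm H a1 b1 x * (eR2 H R a1 * eR2 H R b1))"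
      by (simp only: eR2_def sum_distrib_right[symmetric])
    also have "\<dots> = (\<Sum>a1\<in>UNIV. \<Sum>b1\<in>UNIV.
          hm H a1 b1 x * (eR2 H R a1 * eR2 H R b1) * (\<Sum>a2\<in>UNIV. hu H a2 * he H a2 * (\<Sum>b3\<in>UNIV. hu H b3 * he H b3)))"
      by (simp add: sum_distrib_left sum_distrib_right ac_simps)
    also have "\<dots> = hmul H (eR2 H R) (eR2 H R) x"
      by (simp only: he_unit[OF H] mult_1_right) (simp add: hmul_def ac_simps)
    finally show ?thesis .
  qed
  show "hmul H (eR2 H R) (eR2 H R) x = eR2 H R x"
    using eq L Rt by simp
qed

lemma E1_inv:
  assumes H: "is_hopf H" and RI: "t2mul H (\<lambda>(x, y). R x y) Rinv = (\<lambda>(x, y). hu H x * hu H y)"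
  shows "hmul H (eR1 H R) (\<lambda>b2. \<Sum>b1\<in>UNIV. he H b1 * Rinv (b1, b2)) = hu H"
proof
  fix y
  have eq: "(\<Sum>x\<in>UNIV. he H x * t2mul H (\<lambda>(x, y). R x y) Rinv (x, y)) = hu H y"
  proof -
    have "(\<Sum>x\<in>UNIV. he H x * (hu H x * hu H y)) = (\<Sum>x\<in>UNIV. hu H x * he H x) * hu H y"
      by (simp add: sum_distrib_left sum_distrib_right ac_simps)
    then show ?thesis using he_unit[OF H] by (simp add: RI)
  qed
  have "(\<Sum>x\<in>UNIV. he H x * t2mul H (\<lambda>(x, y). R x y) Rinv (x, y))
     = (\<Sum>x\<in>UNIV. \<Sum>a1\<in>UNIV. \<Sum>a2\<in>UNIV. \<Sum>b1\<in>UNIV. \<Sum>b2\<in>UNIV. he H x * (R a1 a2 * Rinv (b1, b2) * hm H a1 b1 x * hm H a2 b2 y))"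
    by (simp add: t2mul_def sum_distrib_left)
  also have "\<dots> = (\<Sum>a2\<in>UNIV. \<Sum>b2\<in>UNIV. \<Sum>a1\<in>UNIV. \<Sum>b1\<in>UNIV. \<Sum>x\<in>UNIV. he H x * (R a1 a2 * Rinv (b1, b2) * hm H a1 b1 x * hm H a2 b2 y))"
    by (rule p5a)
  also have "\<dots> = (\<Sum>a2\<in>UNIV. \<Sum>b2\<in>UNIV. \<Sum>a1\<in>UNIV. \<Sum>b1\<in>UNIV. R a1 a2 * Rinv (b1, b2) * hm H a2 b2 y * (\<Sum>x\<in>UNIV. hm H a1 b1 x * he H x))"
    by (simp add: sum_distrib_left ac_simps)
  also have "\<dots> = (\<Sum>a2\<in>UNIV. \<Sum>b2\<in>UNIV. \<Sum>a1\<in>UNIV. \<Sum>b1\<in>UNIV. R a1 a2 * Rinv (b1, b2) * hm H a2 b2 y * (he H a1 * he H b1))"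
    by (simp only: he_mult[OF H])
  also have "\<dots> = (\<Sum>a2\<in>UNIV. \<Sum>b2\<in>UNIV. hm H a2 b2 y * (\<Sum>a1\<in>UNIV. he H a1 * R a1 a2 * (\<Sum>b1\<in>UNIV. he H b1 * Rinv (b1, b2))))"
    by (simp add: sum_distrib_left sum_distrib_right ac_simps)
  also have "\<dots> = hmul H (eR1 H R) (\<lambda>b2. \<Sum>b1\<in>UNIV. he H b1 * Rinv (b1, b2)) y"
    by (simp only: sum_distrib_right[symmetric]) (simp add: hmul_def eR1_def ac_simps)
  finally show "hmul H (eR1 H R) (\<lambda>b2. \<Sum>b1\<in>UNIV. he H b1 * Rinv (b1, b2)) y = hu H y"
    using eq by simp
qed

lemma E2_inv:
  assumes H: "is_hopf H" and RI: "t2mul H (\<lambda>(x, y). R x y) Rinv = (\<lambda>(x, y). hu H x * hu H y)"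
  shows "hmul H (eR2 H R) (\<lambda>b1. \<Sum>b2\<in>UNIV. Rinv (b1, b2) * he H b2) = hu H"
proof
  fix x
  have eq: "(\<Sum>y\<in>UNIV. he H y * t2mul H (\<lambda>(x, y). R x y) Rinv (x, y)) = hu H x"
  proof -
    have "(\<Sum>y\<in>UNIV. he H y * (hu H x * hu H y)) = (\<Sum>y\<in>UNIV. hu H y * he H y) * hu H x"
      by (simp add: sum_distrib_left sum_distrib_right ac_simps)
    then show ?thesis using he_unit[OF H] by (simp add: RI)
  qed
  have "(\<Sum>y\<in>UNIV. he H y * t2mul H (\<lambda>(x, y). R x y) Rinv (x, y))
     = (\<Sum>y\<in>UNIV. \<Sum>a1\<in>UNIV. \<Sum>a2\<in>UNIV. \<Sum>b1\<in>UNIV. \<Sum>b2\<in>UNIV. he H y * (R a1 a2 * Rinv (b1, b2) * hm H a1 b1 x * hm H a2 b2 y))"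
    by (simp add: t2mul_def sum_distrib_left)
  also have "\<dots> = (\<Sum>a1\<in>UNIV. \<Sum>b1\<in>UNIV. \<Sum>a2\<in>UNIV. \<Sum>b2\<in>UNIV. \<Sum>y\<in>UNIV. he H y * (R a1 a2 * Rinv (b1, b2) * hm H a1 b1 x * hm H a2 b2 y))"
    by (rule p5b)
  also have "\<dots> = (\<Sum>a1\<in>UNIV. \<Sum>b1\<in>UNIV. \<Sum>a2\<in>UNIV. \<Sum>b2\<in>UNIV. R a1 a2 * Rinv (b1, b2) * hm H a1 b1 x * (\<Sum>y\<in>UNIV. hm H a2 b2 y * he H y))"
    by (simp add: sum_distrib_left ac_simps)
  also have "\<dots> = (\<Sum>a1\<in>UNIV. \<Sum>b1\<in>UNIV. \<Sum>a2\<in>UNIV. \<Sum>b2\<in>UNIV. R a1 a2 * Rinv (b1, b2) * hm H a1 b1 x * (he H a2 * he H b2))"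
    by (simp only: he_mult[OF H])
  also have "\<dots> = (\<Sum>a1\<in>UNIV. \<Sum>b1\<in>UNIV. hm H a1 b1 x * (\<Sum>a2\<in>UNIV. R a1 a2 * he H a2 * (\<Sum>b2\<in>UNIV. Rinv (b1, b2) * he H b2)))"
    by (simp add: sum_distrib_left sum_distrib_right ac_simps)
  also have "\<dots> = hmul H (eR2 H R) (\<lambda>b1. \<Sum>b2\<in>UNIV. Rinv (b1, b2) * he H b2) x"
    by (simp only: sum_distrib_right[symmetric]) (simp add: hmul_def eR2_def ac_simps)
  finally show "hmul H (eR2 H R) (\<lambda>b1. \<Sum>b2\<in>UNIV. Rinv (b1, b2) * he H b2) x = hu H x"
    using eq by simp
qed

lemma idem_inv_unit:
  assumes H: "is_hopf H" and "hmul H e e = e" and "hmul H e g = hu H"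
  shows "e = hu H"
proof -
  have "e = hmul H e (hu H)" using hmul_unitr[OF H] by simp
  also have "\<dots> = hmul H e (hmul H e g)" using assms by simp
  also have "\<dots> = hmul H (hmul H e e) g" using hmul_assoc[OF H] by simp
  also have "\<dots> = hu H" using assms by simp
  finally show ?thesis .
qed

lemma eR_unit:
  assumes H: "is_hopf H" and Q: "is_quasitriangular H R"
  shows "eR1 H R = hu H" and "eR2 H R = hu H"
proof -
  obtain Rinv where RI: "t2mul H (\<lambda>(x, y). R x y) Rinv = (\<lambda>(x, y). hu H x * hu H y)"
    using qtD(1)[OF Q] by blast
  show "eR1 H R = hu H" by (rule idem_inv_unit[OF H E1_idem[OF H Q] E1_inv[OF H RI]])
  show "eR2 H R = hu H" by (rule idem_inv_unit[OF H E2_idem[OF H Q] E2_inv[OF H RI]])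
qed

definition Qm :: "('a::finite, 'k::field) hopf_sc \<Rightarrow> ('a \<Rightarrow> 'a \<Rightarrow> 'k) \<Rightarrow> 'a \<Rightarrow> 'a \<Rightarrow> 'k" where
  "Qm H R u v = t2mul H (\<lambda>(x, y). R y x) (\<lambda>(x, y). R x y) (u, v)"

lemma Qm_expand: "Qm H R u v = (\<Sum>a1\<in>UNIV. \<Sum>a2\<in>UNIV. \<Sum>b1\<in>UNIV. \<Sum>b2\<in>UNIV. R a2 a1 * R b1 b2 * hm H a1 b1 u * hm H a2 b2 v)"
  by (simp add: Qm_def t2mul_def)

lemma Q_counitR:
  assumes H: "is_hopf H" and Q: "is_quasitriangular H R"
  shows "(\<Sum>v\<in>UNIV. he H v * Qm H R u v) = hu H u"
proof -
  have "(\<Sum>v\<in>UNIV. he H v * Qm H R u v) = (\<Sum>v\<in>UNIV. \<Sum>a1\<in>UNIV. \<Sum>a2\<in>UNIV. \<Sum>b1\<in>UNIV. \<Sum>b2\<in>UNIV.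
      he H v * (R a2 a1 * R b1 b2 * hm H a1 b1 u * hm H a2 b2 v))"
    by (simp add: Qm_expand sum_distrib_left)
  also have "\<dots> = (\<Sum>a1\<in>UNIV. \<Sum>b1\<in>UNIV. \<Sum>a2\<in>UNIV. \<Sum>b2\<in>UNIV. \<Sum>v\<in>UNIV.
      he H v * (R a2 a1 * R b1 b2 * hm H a1 b1 u * hm H a2 b2 v))"
    by (rule p5b)
  also have "\<dots> = (\<Sum>a1\<in>UNIV. \<Sum>b1\<in>UNIV. \<Sum>a2\<in>UNIV. \<Sum>b2\<in>UNIV.
      R a2 a1 * R b1 b2 * hm H a1 b1 u * (\<Sum>v\<in>UNIV. hm H a2 b2 v * he H v))"
    by (simp add: sum_distrib_left ac_simps)
  also have "\<dots> = (\<Sum>a1\<in>UNIV. \<Sum>b1\<in>UNIV. \<Sum>a2\<in>UNIV. \<Sum>b2\<in>UNIV.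
      R a2 a1 * R b1 b2 * hm H a1 b1 u * (he H a2 * he H b2))"
    by (simp only: he_mult[OF H])
  also have "\<dots> = (\<Sum>a1\<in>UNIV. \<Sum>b1\<in>UNIV. hm H a1 b1 u * (\<Sum>a2\<in>UNIV. he H a2 * R a2 a1 * (\<Sum>b2\<in>UNIV. R b1 b2 * he H b2)))"
    by (simp add: sum_distrib_left sum_distrib_right ac_simps)
  also have "\<dots> = (\<Sum>a1\<in>UNIV. \<Sum>b1\<in>UNIV. hm H a1 b1 u * (eR1 H R a1 * eR2 H R b1))"
    by (simp only: sum_distrib_right[symmetric] eR1_def eR2_def)
  also have "\<dots> = (\<Sum>a1\<in>UNIV. hu H a1 * (\<Sum>b1\<in>UNIV. hu H b1 * hm H a1 b1 u))"
    by (simp add: eR_unit[OF H Q] sum_distrib_left ac_simps)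
  also have "\<dots> = hu H u" by (simp add: hm_unitr[OF H])
  finally show ?thesis .
qed

lemma Q_counitL:
  assumes H: "is_hopf H" and Q: "is_quasitriangular H R"
  shows "(\<Sum>u\<in>UNIV. he H u * Qm H R u v) = hu H v"
proof -
  have "(\<Sum>u\<in>UNIV. he H u * Qm H R u v) = (\<Sum>u\<in>UNIV. \<Sum>a1\<in>UNIV. \<Sum>a2\<in>UNIV. \<Sum>b1\<in>UNIV. \<Sum>b2\<in>UNIV.
      he H u * (R a2 a1 * R b1 b2 * hm H a1 b1 u * hm H a2 b2 v))"
    by (simp add: Qm_expand sum_distrib_left)
  also have "\<dots> = (\<Sum>a2\<in>UNIV. \<Sum>b2\<in>UNIV. \<Sum>a1\<in>UNIV. \<Sum>b1\<in>UNIV. \<Sum>u\<in>UNIV.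
      he H u * (R a2 a1 * R b1 b2 * hm H a1 b1 u * hm H a2 b2 v))"
    by (rule p5a)
  also have "\<dots> = (\<Sum>a2\<in>UNIV. \<Sum>b2\<in>UNIV. \<Sum>a1\<in>UNIV. \<Sum>b1\<in>UNIV.
      R a2 a1 * R b1 b2 * hm H a2 b2 v * (\<Sum>u\<in>UNIV. hm H a1 b1 u * he H u))"
    by (simp add: sum_distrib_left ac_simps)
  also have "\<dots> = (\<Sum>a2\<in>UNIV. \<Sum>b2\<in>UNIV. \<Sum>a1\<in>UNIV. \<Sum>b1\<in>UNIV.
      R a2 a1 * R b1 b2 * hm H a2 b2 v * (he H a1 * he H b1))"
    by (simp only: he_mult[OF H])
  also have "\<dots> = (\<Sum>a2\<in>UNIV. \<Sum>b2\<in>UNIV. hm H a2 b2 v * (\<Sum>a1\<in>UNIV. R a2 a1 * he H a1 * (\<Sum>b1\<in>UNIV. he H b1 * R b1 b2)))"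
    by (simp add: sum_distrib_left sum_distrib_right ac_simps)
  also have "\<dots> = (\<Sum>a2\<in>UNIV. \<Sum>b2\<in>UNIV. hm H a2 b2 v * (eR2 H R a2 * eR1 H R b2))"
    by (simp only: sum_distrib_right[symmetric] eR1_def eR2_def)
  also have "\<dots> = (\<Sum>a2\<in>UNIV. hu H a2 * (\<Sum>b2\<in>UNIV. hu H b2 * hm H a2 b2 v))"
    by (simp add: eR_unit[OF H Q] sum_distrib_left ac_simps)
  also have "\<dots> = hu H v" by (simp add: hm_unitr[OF H])
  finally show ?thesis .
qed

lemma rep_mult:
  assumes "is_rep H n rho" "p < n" "q < n"
  shows "(\<Sum>r<n. rho a p r * rho b r q) = (\<Sum>c\<in>UNIV. hm H a b c * rho c p q)"
  using assms unfolding is_rep_def by auto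

lemma rep_unit:
  assumes "is_rep H n rho" "p < n" "q < n"
  shows "(\<Sum>a\<in>UNIV. hu H a * rho a p q) = kdelta p q"
  using assms unfolding is_rep_def by auto

lemma dbl:
  assumes H: "is_hopf H" and X: "is_rep H n rhoX" and Y: "is_rep H m rhoY" and st: "s < n" "t < m"
  shows "braid R m rhoY n rhoX (braid R n rhoX m rhoY v) (s, t) =
    (\<Sum>c\<in>UNIV. \<Sum>d\<in>UNIV. \<Sum>p<n. \<Sum>q<m. Qm H R c d * (rhoX c s p * rhoY d t q * v (p, q)))"
proof -
  have "braid R m rhoY n rhoX (braid R n rhoX m rhoY v) (s, t) =
     (\<Sum>a\<in>UNIV. \<Sum>b\<in>UNIV. R a b * (\<Sum>q'<n. \<Sum>p'<m. rhoX b s q' * rhoY a t p' *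
        (\<Sum>a'\<in>UNIV. \<Sum>b'\<in>UNIV. R a' b' * (\<Sum>q''<m. \<Sum>p''<n. rhoY b' p' q'' * rhoX a' q' p'' * v (p'', q'')))))"
    using st by (simp add: braid_def)
  also have "\<dots> = (\<Sum>a\<in>UNIV. \<Sum>b\<in>UNIV. \<Sum>q'<n. \<Sum>p'<m. \<Sum>a'\<in>UNIV. \<Sum>b'\<in>UNIV. \<Sum>q''<m. \<Sum>p''<n.
        R a b * (rhoX b s q' * rhoY a t p' * (R a' b' * (rhoY b' p' q'' * rhoX a' q' p'' * v (p'', q'')))))"
    by (simp add: sum_distrib_left)
  also have "\<dots> = (\<Sum>a\<in>UNIV. \<Sum>b\<in>UNIV. \<Sum>a'\<in>UNIV. \<Sum>b'\<in>UNIV. \<Sum>p''<n. \<Sum>q''<m. \<Sum>q'<n. \<Sum>p'<m.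
        R a b * (rhoX b s q' * rhoY a t p' * (R a' b' * (rhoY b' p' q'' * rhoX a' q' p'' * v (p'', q'')))))"
    by (rule p8b)
  also have "\<dots> = (\<Sum>a\<in>UNIV. \<Sum>b\<in>UNIV. \<Sum>a'\<in>UNIV. \<Sum>b'\<in>UNIV. \<Sum>p''<n. \<Sum>q''<m.
        R a b * R a' b' * v (p'', q'') * (\<Sum>q'<n. rhoX b s q' * rhoX a' q' p'' * (\<Sum>p'<m. rhoY a t p' * rhoY b' p' q'')))"
    by (simp add: sum_distrib_left sum_distrib_right ac_simps)
  also have "\<dots> = (\<Sum>a\<in>UNIV. \<Sum>b\<in>UNIV. \<Sum>a'\<in>UNIV. \<Sum>b'\<in>UNIV. \<Sum>p''<n. \<Sum>q''<m.
        R a b * R a' b' * v (p'', q'') * ((\<Sum>q'<n. rhoX b s q' * rhoX a' q' p'') * (\<Sum>p'<m. rhoY a t p' * rhoY b' p' q'')))"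
    by (simp only: sum_distrib_right[symmetric])
  also have "\<dots> = (\<Sum>a\<in>UNIV. \<Sum>b\<in>UNIV. \<Sum>a'\<in>UNIV. \<Sum>b'\<in>UNIV. \<Sum>p''<n. \<Sum>q''<m.
        R a b * R a' b' * v (p'', q'') * ((\<Sum>c\<in>UNIV. hm H b a' c * rhoX c s p'') * (\<Sum>d\<in>UNIV. hm H a b' d * rhoY d t q'')))"
    apply (intro sum.cong refl)
    using st by (simp add: rep_mult[OF X] rep_mult[OF Y])
  also have "\<dots> = (\<Sum>a\<in>UNIV. \<Sum>b\<in>UNIV. \<Sum>a'\<in>UNIV. \<Sum>b'\<in>UNIV. \<Sum>p''<n. \<Sum>q''<m. \<Sum>d\<in>UNIV. \<Sum>c\<in>UNIV.
        R a b * R a' b' * v (p'', q'') * (hm H b a' c * rhoX c s p'' * (hm H a b' d * rhoY d t q'')))"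
    by (simp only: sum_distrib_left sum_distrib_right)
  also have "\<dots> = (\<Sum>c\<in>UNIV. \<Sum>d\<in>UNIV. \<Sum>p''<n. \<Sum>q''<m. \<Sum>b\<in>UNIV. \<Sum>a\<in>UNIV. \<Sum>a'\<in>UNIV. \<Sum>b'\<in>UNIV.
        R a b * R a' b' * v (p'', q'') * (hm H b a' c * rhoX c s p'' * (hm H a b' d * rhoY d t q'')))"
    by (rule p8c)
  also have "\<dots> = (\<Sum>c\<in>UNIV. \<Sum>d\<in>UNIV. \<Sum>p<n. \<Sum>q<m. Qm H R c d * (rhoX c s p * rhoY d t q * v (p, q)))"
    by (simp add: Qm_expand sum_distrib_left sum_distrib_right ac_simps)
  finally show ?thesis .
qed

definition lb :: "('a::finite, 'k::field) hopf_sc \<Rightarrow> ('a \<Rightarrow> 'a \<Rightarrow> 'k) \<Rightarrow> ('a \<Rightarrow> 'b::finite \<Rightarrow> 'k) \<Rightarrow> 'b \<Rightarrow> 'a \<Rightarrow> 'k" where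
  "lb H R p b = (\<lambda>d. \<Sum>u\<in>UNIV. p u b * Qm H R u d)"

lemma hopf_mapD:
  assumes "is_hopf_map H K p"
  shows "\<And>a a' z. (\<Sum>c\<in>UNIV. hm H a a' c * p c z) = (\<Sum>b\<in>UNIV. \<Sum>b'\<in>UNIV. p a b * p a' b' * hm K b b' z)"
    and "\<And>z. (\<Sum>a\<in>UNIV. hu H a * p a z) = hu K z"
    and "\<And>a. (\<Sum>c\<in>UNIV. p a c * he K c) = he H a"
  using assms unfolding is_hopf_map_def by auto

lemma act_lin: "act rho (\<lambda>v. \<Sum>b\<in>UNIV. f b * g b v) t q = (\<Sum>b\<in>UNIV. f b * act rho (g b) t q)"
proof -
  have "act rho (\<lambda>v. \<Sum>b\<in>UNIV. f b * g b v) t q = (\<Sum>a\<in>UNIV. \<Sum>b\<in>UNIV. f b * g b a * rho a t q)"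
    by (simp add: act_def sum_distrib_right)
  also have "\<dots> = (\<Sum>b\<in>UNIV. \<Sum>a\<in>UNIV. f b * g b a * rho a t q)" by (rule sum.swap)
  also have "\<dots> = (\<Sum>b\<in>UNIV. f b * act rho (g b) t q)" by (simp add: act_def sum_distrib_left ac_simps)
  finally show ?thesis .
qed

lemma eps_lin: "(\<Sum>a\<in>UNIV. (\<Sum>b\<in>UNIV. f b * g b a) * (e a::'k::field)) = (\<Sum>b\<in>UNIV. f b * (\<Sum>a\<in>UNIV. g b a * e a))"
proof -
  have "(\<Sum>a\<in>UNIV. (\<Sum>b\<in>UNIV. f b * g b a) * e a) = (\<Sum>a\<in>UNIV. \<Sum>b\<in>UNIV. f b * g b a * e a)"
    by (simp add: sum_distrib_right)
  also have "\<dots> = (\<Sum>b\<in>UNIV. \<Sum>a\<in>UNIV. f b * g b a * e a)" by (rule sum.swap)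
  also have "\<dots> = (\<Sum>b\<in>UNIV. f b * (\<Sum>a\<in>UNIV. g b a * e a))" by (simp add: sum_distrib_left ac_simps)
  finally show ?thesis .
qed

lemma Lset_lin: "(\<lambda>v. \<Sum>u\<in>UNIV. (\<Sum>b\<in>UNIV. p u b * f b) * Qm H R u v) = (\<lambda>v. \<Sum>b\<in>UNIV. f b * lb H R p b v)"
proof
  fix v
  have "(\<Sum>u\<in>UNIV. (\<Sum>b\<in>UNIV. p u b * f b) * Qm H R u v) = (\<Sum>u\<in>UNIV. \<Sum>b\<in>UNIV. f b * (p u b * Qm H R u v))"
    by (simp add: sum_distrib_left sum_distrib_right ac_simps)
  also have "\<dots> = (\<Sum>b\<in>UNIV. \<Sum>u\<in>UNIV. f b * (p u b * Qm H R u v))" by (rule sum.swap)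
  also have "\<dots> = (\<Sum>b\<in>UNIV. f b * lb H R p b v)" by (simp add: lb_def sum_distrib_left)
  finally show "(\<Sum>u\<in>UNIV. (\<Sum>b\<in>UNIV. p u b * f b) * Qm H R u v) = (\<Sum>b\<in>UNIV. f b * lb H R p b v)" .
qed

lemma eps_lb:
  assumes H: "is_hopf H" and Q: "is_quasitriangular H R" and P: "is_hopf_map H K p"
  shows "(\<Sum>a\<in>UNIV. lb H R p b a * he H a) = hu K b"
proof -
  have "(\<Sum>a\<in>UNIV. lb H R p b a * he H a) = (\<Sum>a\<in>UNIV. \<Sum>u\<in>UNIV. p u b * (he H a * Qm H R u a))"
    by (simp add: lb_def sum_distrib_left sum_distrib_right ac_simps)
  also have "\<dots> = (\<Sum>u\<in>UNIV. \<Sum>a\<in>UNIV. p u b * (he H a * Qm H R u a))" by (rule sum.swap)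
  also have "\<dots> = (\<Sum>u\<in>UNIV. p u b * (\<Sum>a\<in>UNIV. he H a * Qm H R u a))" by (simp add: sum_distrib_left)
  also have "\<dots> = (\<Sum>u\<in>UNIV. hu H u * p u b)" by (simp add: Q_counitR[OF H Q] mult.commute)
  also have "\<dots> = hu K b" by (rule hopf_mapD(2)[OF P])
  finally show ?thesis .
qed

lemma lb_he:
  assumes H: "is_hopf H" and Q: "is_quasitriangular H R" and P: "is_hopf_map H K p"
  shows "(\<Sum>b\<in>UNIV. he K b * lb H R p b v) = hu H v"
proof -
  have "(\<Sum>b\<in>UNIV. he K b * lb H R p b v) = (\<Sum>b\<in>UNIV. \<Sum>u\<in>UNIV. Qm H R u v * (p u b * he K b))"
    by (simp add: lb_def sum_distrib_left ac_simps)
  also have "\<dots> = (\<Sum>u\<in>UNIV. \<Sum>b\<in>UNIV. Qm H R u v * (p u b * he K b))" by (rule sum.swap)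
  also have "\<dots> = (\<Sum>u\<in>UNIV. he H u * Qm H R u v)"
    by (simp only: sum_distrib_left[symmetric] hopf_mapD(3)[OF P]) (simp add: mult.commute)
  also have "\<dots> = hu H v" by (rule Q_counitL[OF H Q])
  finally show ?thesis .
qed

lemma dbl_pull:
  assumes H: "is_hopf H" and X: "is_rep H n rhoX" and Y: "is_rep H m rhoY" and st: "s < n" "t < m"
    and pb: "\<And>a q r. q < n \<Longrightarrow> r < n \<Longrightarrow> rhoX a q r = (\<Sum>b\<in>UNIV. p a b * sigma b q r)"
  shows "braid R m rhoY n rhoX (braid R n rhoX m rhoY v) (s, t) =
    (\<Sum>i<n. \<Sum>j<m. (\<Sum>b\<in>UNIV. sigma b s i * act rhoY (lb H R p b) t j) * v (i, j))"
proof -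
  have "braid R m rhoY n rhoX (braid R n rhoX m rhoY v) (s, t) =
    (\<Sum>c\<in>UNIV. \<Sum>d\<in>UNIV. \<Sum>i<n. \<Sum>j<m. Qm H R c d * (rhoX c s i * rhoY d t j * v (i, j)))"
    by (rule dbl[OF H X Y st])
  also have "\<dots> = (\<Sum>c\<in>UNIV. \<Sum>d\<in>UNIV. \<Sum>i<n. \<Sum>j<m. Qm H R c d * ((\<Sum>b\<in>UNIV. p c b * sigma b s i) * rhoY d t j * v (i, j)))"
    apply (intro sum.cong refl)
    using st by (simp add: pb)
  also have "\<dots> = (\<Sum>c\<in>UNIV. \<Sum>d\<in>UNIV. \<Sum>i<n. \<Sum>j<m. \<Sum>b\<in>UNIV. Qm H R c d * (p c b * sigma b s i * rhoY d t j * v (i, j)))"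
    by (simp add: sum_distrib_left sum_distrib_right)
  also have "\<dots> = (\<Sum>i<n. \<Sum>j<m. \<Sum>b\<in>UNIV. \<Sum>d\<in>UNIV. \<Sum>c\<in>UNIV. Qm H R c d * (p c b * sigma b s i * rhoY d t j * v (i, j)))"
    by (rule p5c)
  also have "\<dots> = (\<Sum>i<n. \<Sum>j<m. (\<Sum>b\<in>UNIV. sigma b s i * act rhoY (lb H R p b) t j) * v (i, j))"
    by (simp add: act_def lb_def sum_distrib_left sum_distrib_right ac_simps)
  finally show ?thesis .
qed

lemma kd_lt: assumes "(s::nat) < n" shows "(\<Sum>i<n. kdelta s i * g i) = (g s :: 'k::field)"
proof -
  have "(\<Sum>i<n. kdelta s i * g i) = (\<Sum>i<n. if s = i then g i else 0)"
    by (rule sum.cong) (auto simp: kdelta_def)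
  then show ?thesis using assms by simp
qed

lemma act_hmul:
  assumes Y: "is_rep H m rho" and tq: "t < m" "q < m"
  shows "act rho (hmul H x y) t q = (\<Sum>r<m. act rho x t r * act rho y r q)"
proof -
  have "act rho (hmul H x y) t q = (\<Sum>c\<in>UNIV. \<Sum>a\<in>UNIV. \<Sum>b\<in>UNIV. x a * y b * (hm H a b c * rho c t q))"
    by (simp add: act_def hmul_def sum_distrib_left sum_distrib_right ac_simps)
  also have "\<dots> = (\<Sum>a\<in>UNIV. \<Sum>b\<in>UNIV. \<Sum>c\<in>UNIV. x a * y b * (hm H a b c * rho c t q))"
    by (rule p3b)
  also have "\<dots> = (\<Sum>a\<in>UNIV. \<Sum>b\<in>UNIV. x a * y b * (\<Sum>c\<in>UNIV. hm H a b c * rho c t q))"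
    by (simp add: sum_distrib_left)
  also have "\<dots> = (\<Sum>a\<in>UNIV. \<Sum>b\<in>UNIV. x a * y b * (\<Sum>r<m. rho a t r * rho b r q))"
    by (simp add: rep_mult[OF Y tq])
  also have "\<dots> = (\<Sum>a\<in>UNIV. \<Sum>b\<in>UNIV. \<Sum>r<m. x a * y b * (rho a t r * rho b r q))"
    by (simp add: sum_distrib_left)
  also have "\<dots> = (\<Sum>r<m. \<Sum>a\<in>UNIV. \<Sum>b\<in>UNIV. x a * y b * (rho a t r * rho b r q))"
    by (rule p3a)
  also have "\<dots> = (\<Sum>r<m. \<Sum>a\<in>UNIV. x a * rho a t r * (\<Sum>b\<in>UNIV. y b * rho b r q))"
    by (simp add: sum_distrib_left sum_distrib_right ac_simps)
  also have "\<dots> = (\<Sum>r<m. act rho x t r * act rho y r q)"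
    by (simp only: act_def sum_distrib_right[symmetric])
  finally show ?thesis .
qed

lemma act_sum: "act rho (\<lambda>c. \<Sum>i<N. g i c) t q = (\<Sum>i<N. act rho (g i) t q)"
proof -
  have "act rho (\<lambda>c. \<Sum>i<N. g i c) t q = (\<Sum>a\<in>UNIV. \<Sum>i<N. g i a * rho a t q)"
    by (simp add: act_def sum_distrib_right)
  also have "\<dots> = (\<Sum>i<N. \<Sum>a\<in>UNIV. g i a * rho a t q)" by (rule sum.swap)
  also have "\<dots> = (\<Sum>i<N. act rho (g i) t q)" by (simp add: act_def)
  finally show ?thesis .
qed

lemma Lset_eq: "Lset H R p = {x. \<exists>f. x = (\<lambda>v. \<Sum>b\<in>UNIV. f b * lb H R p b v)}"
  unfolding Lset_def using Lset_lin[unfolded Qm_def, of p _ H R] by simp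

lemma fwd:
  assumes H: "is_hopf H" and Q: "is_quasitriangular H R" and P: "is_hopf_map H K p"
    and Y: "is_rep H m rhoY" and IQ: "in_quotient_rep H R p m rhoY" and tq: "t < m" "q < m"
  shows "act rhoY (lb H R p b) t q = hu K b * kdelta t q"
proof -
  define f where "f = (\<lambda>b'. kdelta b b' - hu K b * he K b')"
  define x where "x = (\<lambda>v. lb H R p b v - hu K b * hu H v)"
  have xf: "x = (\<lambda>v. \<Sum>b'\<in>UNIV. f b' * lb H R p b' v)"
  proof
    fix v
    have "(\<Sum>b'\<in>UNIV. f b' * lb H R p b' v) = (\<Sum>b'\<in>UNIV. kdelta b b' * lb H R p b' v - hu K b * (he K b' * lb H R p b' v))"
      by (rule sum.cong) (simp_all add: f_def algebra_simps)
    also have "\<dots> = (\<Sum>b'\<in>UNIV. kdelta b b' * lb H R p b' v) - hu K b * (\<Sum>b'\<in>UNIV. he K b' * lb H R p b' v)"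
      by (simp only: sum_subtractf sum_distrib_left)
    also have "\<dots> = x v" by (simp add: lb_he[OF H Q P] x_def)
    finally show "x v = (\<Sum>b'\<in>UNIV. f b' * lb H R p b' v)" by simp
  qed
  have eps: "(\<Sum>a\<in>UNIV. x a * he H a) = 0"
  proof -
    have "(\<Sum>a\<in>UNIV. x a * he H a) = (\<Sum>a\<in>UNIV. lb H R p b a * he H a - hu K b * (hu H a * he H a))"
      by (rule sum.cong) (simp_all add: x_def algebra_simps)
    also have "\<dots> = (\<Sum>a\<in>UNIV. lb H R p b a * he H a) - hu K b * (\<Sum>a\<in>UNIV. hu H a * he H a)"
      by (simp only: sum_subtractf sum_distrib_left)
    also have "\<dots> = 0" by (simp add: eps_lb[OF H Q P] he_unit[OF H])
    finally show ?thesis .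
  qed
  have xL: "x \<in> Lplus H R p"
    unfolding Lplus_def Lset_eq using xf eps by blast
  have xH: "x \<in> HLplus H R p"
    unfolding HLplus_def mem_Collect_eq
    by (rule exI[of _ "1::nat"], rule exI[of _ "\<lambda>_. hu H"], rule exI[of _ "\<lambda>_. x"])
       (simp add: xL hmul_unitl[OF H])
  have z: "act rhoY x t q = 0" using IQ xH tq unfolding in_quotient_rep_def by blast
  have "act rhoY x t q = (\<Sum>a\<in>UNIV. lb H R p b a * rhoY a t q - hu K b * (hu H a * rhoY a t q))"
    unfolding act_def by (rule sum.cong) (simp_all add: x_def algebra_simps)
  also have "\<dots> = act rhoY (lb H R p b) t q - hu K b * (\<Sum>a\<in>UNIV. hu H a * rhoY a t q)"
    by (simp only: sum_subtractf sum_distrib_left act_def)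
  also have "\<dots> = act rhoY (lb H R p b) t q - hu K b * kdelta t q"
    by (simp add: rep_unit[OF Y tq])
  finally show ?thesis using z by simp
qed

lemma bwd:
  assumes H: "is_hopf H" and Q: "is_quasitriangular H R" and P: "is_hopf_map H K p"
    and Y: "is_rep H m rhoY"
    and A: "\<And>b t q. t < m \<Longrightarrow> q < m \<Longrightarrow> act rhoY (lb H R p b) t q = hu K b * kdelta t q"
  shows "in_quotient_rep H R p m rhoY"
proof -
  have Lz: "act rhoY l r q = 0" if l: "l \<in> Lplus H R p" and rq: "r < m" "q < m" for l r q
  proof -
    obtain f where lf: "l = (\<lambda>v. \<Sum>b\<in>UNIV. f b * lb H R p b v)" and e: "(\<Sum>a\<in>UNIV. l a * he H a) = 0"
      using l unfolding Lplus_def Lset_eq by blast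
    have "(\<Sum>a\<in>UNIV. l a * he H a) = (\<Sum>b\<in>UNIV. f b * hu K b)"
      by (simp add: lf eps_lin eps_lb[OF H Q P])
    with e have e0: "(\<Sum>b\<in>UNIV. f b * hu K b) = 0" by simp
    have "act rhoY l r q = (\<Sum>b\<in>UNIV. f b * (hu K b * kdelta r q))"
      by (simp add: lf act_lin A[OF rq])
    also have "\<dots> = (\<Sum>b\<in>UNIV. f b * hu K b) * kdelta r q"
      by (simp add: sum_distrib_left sum_distrib_right ac_simps)
    finally show ?thesis using e0 by simp
  qed
  show ?thesis
    unfolding in_quotient_rep_def
  proof (intro ballI allI impI)
    fix z r q assume z: "z \<in> HLplus H R p" and rq: "r < m" "q < m"
    obtain N :: nat and h l where l: "\<forall>i<N. l i \<in> Lplus H R p" and zd: "z = (\<lambda>c. \<Sum>i<N. hmul H (h i) (l i) c)"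
      using z unfolding HLplus_def by auto
    have "act rhoY z r q = (\<Sum>i<N. act rhoY (hmul H (h i) (l i)) r q)"
      by (simp add: zd act_sum)
    also have "\<dots> = (\<Sum>i<N. \<Sum>r'<m. act rhoY (h i) r r' * act rhoY (l i) r' q)"
      by (simp add: act_hmul[OF Y rq])
    also have "\<dots> = 0"
      using l rq by (simp add: Lz)
    finally show "act rhoY z r q = 0" .
  qed
qed

lemma pull_rep:
  assumes P: "is_hopf_map H K p" and S: "is_rep K n sigma"
  shows "is_rep H n (\<lambda>a q r. \<Sum>b\<in>UNIV. p a b * sigma b q r)"
  unfolding is_rep_def
proof (intro conjI allI impI)
  fix a a' i j assume ij: "i < n" "j < n"
  have "(\<Sum>c\<in>UNIV. hm H a a' c * (\<Sum>b\<in>UNIV. p c b * sigma b i j)) = (\<Sum>c\<in>UNIV. \<Sum>b\<in>UNIV. hm H a a' c * p c b * sigma b i j)"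
    by (simp add: sum_distrib_left mult.assoc)
  also have "\<dots> = (\<Sum>b\<in>UNIV. \<Sum>c\<in>UNIV. hm H a a' c * p c b * sigma b i j)" by (rule sum.swap)
  also have "\<dots> = (\<Sum>b\<in>UNIV. (\<Sum>c\<in>UNIV. hm H a a' c * p c b) * sigma b i j)"
    by (simp only: sum_distrib_right[symmetric])
  also have "\<dots> = (\<Sum>b\<in>UNIV. (\<Sum>b1\<in>UNIV. \<Sum>b2\<in>UNIV. p a b1 * p a' b2 * hm K b1 b2 b) * sigma b i j)"
    by (simp only: hopf_mapD(1)[OF P])
  also have "\<dots> = (\<Sum>b\<in>UNIV. \<Sum>b1\<in>UNIV. \<Sum>b2\<in>UNIV. p a b1 * p a' b2 * (hm K b1 b2 b * sigma b i j))"
    by (simp add: sum_distrib_right mult.assoc)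
  also have "\<dots> = (\<Sum>b1\<in>UNIV. \<Sum>b2\<in>UNIV. \<Sum>b\<in>UNIV. p a b1 * p a' b2 * (hm K b1 b2 b * sigma b i j))"
    by (rule p3c)
  also have "\<dots> = (\<Sum>b1\<in>UNIV. \<Sum>b2\<in>UNIV. p a b1 * p a' b2 * (\<Sum>b\<in>UNIV. hm K b1 b2 b * sigma b i j))"
    by (simp add: sum_distrib_left)
  also have "\<dots> = (\<Sum>b1\<in>UNIV. \<Sum>b2\<in>UNIV. p a b1 * p a' b2 * (\<Sum>r<n. sigma b1 i r * sigma b2 r j))"
    by (simp add: rep_mult[OF S ij])
  also have "\<dots> = (\<Sum>b1\<in>UNIV. \<Sum>b2\<in>UNIV. \<Sum>r<n. p a b1 * p a' b2 * (sigma b1 i r * sigma b2 r j))"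
    by (simp add: sum_distrib_left)
  also have "\<dots> = (\<Sum>r<n. \<Sum>b1\<in>UNIV. \<Sum>b2\<in>UNIV. p a b1 * p a' b2 * (sigma b1 i r * sigma b2 r j))"
    by (rule p3a)
  also have "\<dots> = (\<Sum>r<n. \<Sum>b1\<in>UNIV. p a b1 * sigma b1 i r * (\<Sum>b2\<in>UNIV. p a' b2 * sigma b2 r j))"
    by (simp add: sum_distrib_left sum_distrib_right ac_simps)
  also have "\<dots> = (\<Sum>r<n. (\<Sum>b1\<in>UNIV. p a b1 * sigma b1 i r) * (\<Sum>b2\<in>UNIV. p a' b2 * sigma b2 r j))"
    by (simp only: sum_distrib_right[symmetric])
  finally show "(\<Sum>c\<in>UNIV. hm H a a' c * (\<Sum>b\<in>UNIV. p c b * sigma b i j)) =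
      (\<Sum>r<n. (\<Sum>b\<in>UNIV. p a b * sigma b i r) * (\<Sum>b\<in>UNIV. p a' b * sigma b r j))" .
next
  fix i j assume ij: "i < n" "j < n"
  have "(\<Sum>a\<in>UNIV. hu H a * (\<Sum>b\<in>UNIV. p a b * sigma b i j)) = (\<Sum>a\<in>UNIV. \<Sum>b\<in>UNIV. hu H a * p a b * sigma b i j)"
    by (simp add: sum_distrib_left mult.assoc)
  also have "\<dots> = (\<Sum>b\<in>UNIV. \<Sum>a\<in>UNIV. hu H a * p a b * sigma b i j)" by (rule sum.swap)
  also have "\<dots> = (\<Sum>b\<in>UNIV. (\<Sum>a\<in>UNIV. hu H a * p a b) * sigma b i j)"
    by (simp only: sum_distrib_right[symmetric])
  also have "\<dots> = (\<Sum>b\<in>UNIV. hu K b * sigma b i j)" by (simp only: hopf_mapD(2)[OF P])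
  also have "\<dots> = kdelta i j" by (rule rep_unit[OF S ij])
  finally show "(\<Sum>a\<in>UNIV. hu H a * (\<Sum>b\<in>UNIV. p a b * sigma b i j)) = kdelta i j" .
qed

lemma reidx:
  assumes "bij_betw e {0..<(N::nat)} (UNIV :: 'b set)"
  shows "(\<Sum>j<N. g (e j)) = (\<Sum>w\<in>(UNIV::'b set). g w)"
proof -
  have "(\<Sum>x\<in>{0..<N}. g (e x)) = sum g UNIV" by (rule sum.reindex_bij_betw[OF assms])
  then show ?thesis by (simp add: atLeast0LessThan)
qed

lemma reg_rep:
  assumes K: "is_hopf K" and e: "bij_betw e {0..<N} (UNIV :: 'b::finite set)"
  shows "is_rep K N (\<lambda>b i j. hm K b (e j) (e i))"
  unfolding is_rep_def
proof (intro conjI allI impI)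
  fix a b i j assume ij: "i < N" "j < N"
  have "(\<Sum>r<N. hm K a (e r) (e i) * hm K b (e j) (e r)) = (\<Sum>w\<in>UNIV. hm K a w (e i) * hm K b (e j) w)"
    by (rule reidx[OF e, of "\<lambda>w. hm K a w (e i) * hm K b (e j) w"])
  also have "\<dots> = (\<Sum>w\<in>UNIV. hm K b (e j) w * hm K a w (e i))" by (simp add: mult.commute)
  also have "\<dots> = (\<Sum>w\<in>UNIV. hm K a b w * hm K w (e j) (e i))" by (simp add: hm_assoc[OF K])
  finally show "(\<Sum>c\<in>UNIV. hm K a b c * hm K c (e j) (e i)) = (\<Sum>r<N. hm K a (e r) (e i) * hm K b (e j) (e r))" by simp
next
  fix i j assume ij: "i < N" "j < N"
  have inj: "e j = e i \<longleftrightarrow> j = i" using e ij unfolding bij_betw_def inj_on_def by auto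
  show "(\<Sum>a\<in>UNIV. hu K a * hm K a (e j) (e i)) = kdelta i j"
    using inj by (simp add: hm_unitl[OF K] kdelta_def)
qed

theorem mainTheorem3:
  fixes H :: "('a::finite, 'k::field) hopf_sc" and K :: "('b::finite, 'k) hopf_sc"
    and R :: "'a \<Rightarrow> 'a \<Rightarrow> 'k" and p :: "'a \<Rightarrow> 'b \<Rightarrow> 'k"
    and m :: nat and rhoY :: "'a \<Rightarrow> nat \<Rightarrow> nat \<Rightarrow> 'k"
  assumes "is_hopf H" and "is_quasitriangular H R" and "is_hopf K"
    and "is_hopf_map H K p" and "surj (lin_map p)"
    and "is_rep H m rhoY"
  shows "in_quotient_rep H R p m rhoY \<longleftrightarrow>
     (\<forall>n rhoX. is_rep H n rhoX \<longrightarrow> pullback_rep K p n rhoX \<longrightarrow>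
        (\<forall>v. in_tensor n m v \<longrightarrow> braid R m rhoY n rhoX (braid R n rhoX m rhoY v) = v))"
proof
  note H = assms(1) and Q = assms(2) and KH = assms(3) and P = assms(4) and Y = assms(6)
  assume IQ: "in_quotient_rep H R p m rhoY"
  have A: "act rhoY (lb H R p b) t q = hu K b * kdelta t q" if "t < m" "q < m" for b t q
    using fwd[OF H Q P Y IQ that] .
  show "\<forall>n rhoX. is_rep H n rhoX \<longrightarrow> pullback_rep K p n rhoX \<longrightarrow>
        (\<forall>v. in_tensor n m v \<longrightarrow> braid R m rhoY n rhoX (braid R n rhoX m rhoY v) = v)"
  proof (intro allI impI)
    fix n :: nat and rhoX :: "'a \<Rightarrow> nat \<Rightarrow> nat \<Rightarrow> 'k" and v :: "nat \<times> nat \<Rightarrow> 'k"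
    assume X: "is_rep H n rhoX" and pb: "pullback_rep K p n rhoX" and tv: "in_tensor n m v"
    obtain sigma where S: "is_rep K n sigma" and pbe: "\<And>a q r. q < n \<Longrightarrow> r < n \<Longrightarrow> rhoX a q r = (\<Sum>b\<in>UNIV. p a b * sigma b q r)"
      using pb unfolding pullback_rep_def by blast
    show "braid R m rhoY n rhoX (braid R n rhoX m rhoY v) = v"
    proof
      fix st :: "nat \<times> nat"
      obtain s t where st: "st = (s, t)" by (cases st)
      show "braid R m rhoY n rhoX (braid R n rhoX m rhoY v) st = v st"
      proof (cases "s < n \<and> t < m")
        case True
        then have s: "s < n" and t: "t < m" by auto
        have "braid R m rhoY n rhoX (braid R n rhoX m rhoY v) (s, t) =
            (\<Sum>i<n. \<Sum>j<m. (\<Sum>b\<in>UNIV. sigma b s i * act rhoY (lb H R p b) t j) * v (i, j))"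
          by (rule dbl_pull[OF H X Y s t pbe])
        also have "\<dots> = (\<Sum>i<n. \<Sum>j<m. kdelta s i * (kdelta t j * v (i, j)))"
        proof (intro sum.cong refl)
          fix i j assume i: "i \<in> {..<n}" and j: "j \<in> {..<m}"
          have "(\<Sum>b\<in>UNIV. sigma b s i * act rhoY (lb H R p b) t j) = (\<Sum>b\<in>UNIV. hu K b * sigma b s i) * kdelta t j"
            using i j t by (simp add: A sum_distrib_left sum_distrib_right ac_simps)
          also have "\<dots> = kdelta s i * kdelta t j" using i s by (simp add: rep_unit[OF S])
          finally show "(\<Sum>b\<in>UNIV. sigma b s i * act rhoY (lb H R p b) t j) * v (i, j) = kdelta s i * (kdelta t j * v (i, j))"
            by simp
        qed
        also have "\<dots> = (\<Sum>i<n. kdelta s i * (\<Sum>j<m. kdelta t j * v (i, j)))"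
          by (simp add: sum_distrib_left)
        also have "\<dots> = v (s, t)" using s t by (simp add: kd_lt)
        finally show ?thesis using st by simp
      next
        case False
        then have "v (s, t) = 0" using tv unfolding in_tensor_def by auto
        moreover have "braid R m rhoY n rhoX (braid R n rhoX m rhoY v) (s, t) = 0"
          unfolding braid_def by (simp only: case_prod_conv if_not_P[OF False])
        ultimately show ?thesis using st by simp
      qed
    qed
  qed
next
  note H = assms(1) and Q = assms(2) and KH = assms(3) and P = assms(4) and Y = assms(6)
  assume B: "\<forall>n rhoX. is_rep H n rhoX \<longrightarrow> pullback_rep K p n rhoX \<longrightarrow>
        (\<forall>v. in_tensor n m v \<longrightarrow> braid R m rhoY n rhoX (braid R n rhoX m rhoY v) = v)"
  define N where "N = card (UNIV :: 'b set)"
  obtain e where e: "bij_betw e {0..<N} (UNIV :: 'b set)"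
    using ex_bij_betw_nat_finite[of "UNIV :: 'b set"] unfolding N_def by auto
  define sigma where "sigma = (\<lambda>b i j. hm K b (e j) (e i))"
  define rhoX where "rhoX = (\<lambda>a q r. \<Sum>b\<in>UNIV. p a b * sigma b q r)"
  have S: "is_rep K N sigma" unfolding sigma_def by (rule reg_rep[OF KH e])
  have X: "is_rep H N rhoX" unfolding rhoX_def by (rule pull_rep[OF P S])
  have pbX: "pullback_rep K p N rhoX" unfolding pullback_rep_def rhoX_def using S by blast
  have BX: "\<And>v. in_tensor N m v \<Longrightarrow> braid R m rhoY N rhoX (braid R N rhoX m rhoY v) = v"
    using B X pbX by blast
  have key: "(\<Sum>b\<in>UNIV. sigma b s j * act rhoY (lb H R p b) t q) = (if s = j \<and> t = q then 1 else 0)"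
    if s: "s < N" and j: "j < N" and t: "t < m" and q: "q < m" for s j t q
  proof -
    define v :: "nat \<times> nat \<Rightarrow> 'k" where "v = (\<lambda>(i', j'). if i' = j \<and> j' = q then 1 else 0)"
    have tv: "in_tensor N m v" unfolding in_tensor_def v_def using j q by auto
    have "v (s, t) = braid R m rhoY N rhoX (braid R N rhoX m rhoY v) (s, t)" using BX[OF tv] by simp
    also have "\<dots> = (\<Sum>i<N. \<Sum>j'<m. (\<Sum>b\<in>UNIV. sigma b s i * act rhoY (lb H R p b) t j') * v (i, j'))"
      by (rule dbl_pull[OF H X Y s t], simp add: rhoX_def)
    also have "\<dots> = (\<Sum>i<N. \<Sum>j'<m. kdelta j i * (kdelta q j' * (\<Sum>b\<in>UNIV. sigma b s i * act rhoY (lb H R p b) t j')))"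
      by (intro sum.cong refl) (simp add: v_def kdelta_def)
    also have "\<dots> = (\<Sum>i<N. kdelta j i * (\<Sum>j'<m. kdelta q j' * (\<Sum>b\<in>UNIV. sigma b s i * act rhoY (lb H R p b) t j')))"
      by (simp add: sum_distrib_left)
    also have "\<dots> = (\<Sum>b\<in>UNIV. sigma b s j * act rhoY (lb H R p b) t q)"
      using j q by (simp add: kd_lt)
    finally show ?thesis by (simp add: v_def)
  qed
  have A: "act rhoY (lb H R p b) t q = hu K b * kdelta t q" if t: "t < m" and q: "q < m" for b t q
  proof -
    obtain s where s: "s < N" and sb: "e s = b"
      using e unfolding bij_betw_def by (metis UNIV_I atLeastLessThan_iff imageE)
    have "(\<Sum>j<N. hu K (e j) * (\<Sum>b'\<in>UNIV. sigma b' s j * act rhoY (lb H R p b') t q))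
        = (\<Sum>j<N. hu K (e j) * (if s = j \<and> t = q then 1 else 0))"
      by (intro sum.cong refl) (simp add: key s t q)
    also have "\<dots> = (\<Sum>j<N. kdelta s j * (hu K (e j) * kdelta t q))"
      by (intro sum.cong refl) (simp add: kdelta_def)
    also have "\<dots> = hu K b * kdelta t q" using s sb by (simp add: kd_lt)
    finally have 1: "(\<Sum>j<N. hu K (e j) * (\<Sum>b'\<in>UNIV. sigma b' s j * act rhoY (lb H R p b') t q)) = hu K b * kdelta t q" .
    have "(\<Sum>j<N. hu K (e j) * (\<Sum>b'\<in>UNIV. sigma b' s j * act rhoY (lb H R p b') t q))
       = (\<Sum>w\<in>UNIV. hu K w * (\<Sum>b'\<in>UNIV. hm K b' w (e s) * act rhoY (lb H R p b') t q))"
      using reidx[OF e, of "\<lambda>w. hu K w * (\<Sum>b'\<in>UNIV. hm K b' w (e s) * act rhoY (lb H R p b') t q)"]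
      by (simp add: sigma_def)
    also have "\<dots> = (\<Sum>w\<in>UNIV. \<Sum>b'\<in>UNIV. act rhoY (lb H R p b') t q * (hu K w * hm K b' w (e s)))"
      by (simp add: sum_distrib_left ac_simps)
    also have "\<dots> = (\<Sum>b'\<in>UNIV. \<Sum>w\<in>UNIV. act rhoY (lb H R p b') t q * (hu K w * hm K b' w (e s)))"
      by (rule sum.swap)
    also have "\<dots> = (\<Sum>b'\<in>UNIV. act rhoY (lb H R p b') t q * kdelta b' (e s))"
      by (simp add: sum_distrib_left[symmetric] hm_unitr[OF KH])
    also have "\<dots> = act rhoY (lb H R p b) t q" using sb by simp
    finally show ?thesis using 1 by simp
  qed
  show "in_quotient_rep H R p m rhoY" by (rule bwd[OF H Q P Y A])
qed

end
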